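(* Let $\alpha\in(1,2)$, let $f_k$ ($k\in\mathbb N$) be as in an admissible system, let $D_k:=\lfloor4^{\alpha k}\rfloor$ and $\varphi_k:=\frac1{D_k}\sum_{j=0}^{D_k-1}f_k\circ T^j$. Define $V_n(\varphi):=\sum_{k>\frac1{2\alpha}\log n}S_n\!\left(\varphi_k-\int\varphi_k\,dm\right)$ (the series converging in $L^1(m)$). Then $n^{-1/\alpha}V_n(\varphi)\to0$ in probability as $n\to\infty$.
   Context: $(\mathcal X,\mathcal B,m,T)$ is an ergodic, aperiodic probability preserving system; $\log$ is base $2$; $S_n(h):=\sum_{j=0}^{n-1}h\circ T^j$. $S_\alpha(\sigma,\beta,\mu)$ denotes the stable law with characteristic function $\exp\{-\sigma^\alpha|\theta|^\alpha(1-i\beta\,\mathrm{sign}(\theta)\tan(\pi\alpha/2))+i\mu\theta\}$ ($\alpha\neq1$). Triangular array: on $(\Omega,\mathcal F,\mathbb P)$ let $\{X_k(m):k,m\in\mathbb N\}$ be independent with $X_k(m)\sim S_\alpha(k^{-1/\alpha},1,0)$; $Y_k(m):=X_k(m)\mathbf 1_{[2^k\le X_k(m)\le4^k]}$; $Z_k(m):=\sum_{j=8^k}^{16^k}\frac{j}{4^k}\mathbf 1_{[j/4^k\le Y_k(m)<(j+1)/4^k]}$. Let $d_k:=4^{k^2}$. An admissible system is a sequence of measurable $f_k:\mathcal X\to\mathbb R$ such that the family $\{f_k\circ T^j:k\in\mathbb N,0\le j<2d_k\}$ has under $m$ the same joint distribution as $\{Z_k(j+1):k\in\mathbb N,0\le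 j<2d_k\}$, together with $g_k:=f_k\circ T^{d_k}$. *)

theory Defs
  imports "HOL-Probability.Probability"
begin

definition ergodic_aperiodic_pps :: "'a measure \<Rightarrow> ('a \<Rightarrow> 'a) \<Rightarrow> bool" where
  "ergodic_aperiodic_pps M T \<longleftrightarrow>
     prob_space M \<and> T \<in> M \<rightarrow>\<^sub>M M \<and> distr M M T = M \<and>
     (\<forall>A\<in>sets M. T -` A \<inter> space M = A \<longrightarrow> measure M A = 0 \<or> measure M A = 1) \<and>
     (AE x in M. \<forall>n::nat. n \<ge> 1 \<longrightarrow> (T ^^ n) x \<noteq> x)"

definition birkhoff_sum :: "('a \<Rightarrow> 'a) \<Rightarrow> nat \<Rightarrow> ('a \<Rightarrow> real) \<Rightarrow> 'a \<Rightarrow> real" where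
  "birkhoff_sum T n h x = (\<Sum>j<n. h ((T ^^ j) x))"

text \<open>N is the stable law S_alpha(sigma,beta,mu) (alpha /= 1), via its characteristic function.\<close>
definition stable_law :: "real \<Rightarrow> real \<Rightarrow> real \<Rightarrow> real \<Rightarrow> real measure \<Rightarrow> bool" where
  "stable_law \<alpha> \<sigma> \<beta> \<mu> N \<longleftrightarrow> real_distribution N \<and>
     (\<forall>\<theta>::real. char N \<theta> =
        exp (- complex_of_real (\<sigma> powr \<alpha> * \<bar>\<theta>\<bar> powr \<alpha>)
               * (1 - \<i> * complex_of_real (\<beta> * sgn \<theta> * tan (pi * \<alpha> / 2)))
             + \<i> * complex_of_real (\<mu> * \<theta>)))"

definition triangular_array :: "real \<Rightarrow> 'b measure \<Rightarrow> (nat \<Rightarrow> nat \<Rightarrow> 'b \<Rightarrow> real) \<Rightarrow> bool" where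
  "triangular_array \<alpha> P X \<longleftrightarrow> prob_space P \<and>
     prob_space.indep_vars P (\<lambda>_. borel) (\<lambda>(k, m). X k m) {(k, m). k \<ge> 1 \<and> m \<ge> 1} \<and>
     (\<forall>k\<ge>1. \<forall>m\<ge>1. stable_law \<alpha> (real k powr (-1 / \<alpha>)) 1 0 (distr P borel (X k m)))"

definition Ytr :: "nat \<Rightarrow> real \<Rightarrow> real" where
  "Ytr k x = x * indicator {2 ^ k .. 4 ^ k} x"

definition Zq :: "nat \<Rightarrow> real \<Rightarrow> real" where
  "Zq k x = (\<Sum>j\<in>{8 ^ k .. 16 ^ k :: nat}. (real j / 4 ^ k) *
              indicator {real j / 4 ^ k ..< (real j + 1) / 4 ^ k} (Ytr k x))"

definition dk :: "nat \<Rightarrow> nat" where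
  "dk k = 4 ^ (k ^ 2)"

definition adm_index :: "(nat \<times> nat) set" where
  "adm_index = {(k, j). k \<ge> 1 \<and> j < 2 * dk k}"

definition admissible_system ::
  "'a measure \<Rightarrow> ('a \<Rightarrow> 'a) \<Rightarrow> 'b measure \<Rightarrow> (nat \<Rightarrow> nat \<Rightarrow> 'b \<Rightarrow> real) \<Rightarrow> (nat \<Rightarrow> 'a \<Rightarrow> real) \<Rightarrow> bool" where
  "admissible_system M T P X f \<longleftrightarrow>
     (\<forall>k\<ge>1. f k \<in> borel_measurable M) \<and>
     distr M (PiM adm_index (\<lambda>_. borel)) (\<lambda>x. \<lambda>i\<in>adm_index. f (fst i) ((T ^^ snd i) x))
   = distr P (PiM adm_index (\<lambda>_. borel)) (\<lambda>\<omega>. \<lambda>i\<in>adm_index. Zq (fst i) (X (fst i) (snd i + 1) \<omega>))"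

definition Dk :: "real \<Rightarrow> nat \<Rightarrow> nat" where
  "Dk \<alpha> k = nat \<lfloor>4 powr (\<alpha> * real k)\<rfloor>"

definition phik :: "real \<Rightarrow> ('a \<Rightarrow> 'a) \<Rightarrow> (nat \<Rightarrow> 'a \<Rightarrow> real) \<Rightarrow> nat \<Rightarrow> 'a \<Rightarrow> real" where
  "phik \<alpha> T f k x = (1 / real (Dk \<alpha> k)) * (\<Sum>j<Dk \<alpha> k. f k ((T ^^ j) x))"

end

theory Submission
  imports Defs "HOL-Real_Asymp.Real_Asymp"
begin

lemma (in real_distribution) main_bound:
  assumes "u > 0"
  shows "u * measure M {x. abs x \<ge> 2 / u} \<le> Re (CLBINT t:{-u..u}. 1 - char M t)"
proof -
  have *: "\<And>u x. u > 0 \<Longrightarrow> x \<noteq> 0 \<Longrightarrow> (CLBINT t:{-u..u}. 1 - iexp (t * x)) =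
      2 * (u  - sin (u * x) / x)"
  proof -
    fix u :: real and x :: real
    assume "u > 0" and "x \<noteq> 0"
    hence "(CLBINT t:{-u..u}. 1 - iexp (t * x)) = (CLBINT t=-u..u. 1 - iexp (t * x))"
      by (subst interval_integral_Icc, auto)
    also have "\<dots> = (CLBINT t=-u..ereal 0. 1 - iexp (t * x)) + (CLBINT t= ereal 0..u. 1 - iexp (t * x))"
      using \<open>u > 0\<close>
      by (subst interval_integral_sum; force simp add: interval_integrable_isCont)
    also have "\<dots> = (CLBINT t=ereal 0..u. 1 - iexp (t * -x)) + (CLBINT t=ereal 0..u. 1 - iexp (t * x))"
      by (subst interval_integral_reflect, auto)
    also have "... = CLBINT xa=ereal 0..ereal u. 1 - iexp (xa * - x) + (1 - iexp (xa * x))"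
      by (subst interval_lebesgue_integral_add (2) [symmetric]) (auto simp: interval_integrable_isCont)
    also have "\<dots> = (LBINT t=ereal 0..u. 2 - 2 * cos (t * x))"
      unfolding exp_Euler cos_of_real by (simp flip: interval_lebesgue_integral_of_real)
    also have "\<dots> = 2 * u - 2 * sin (u * x) / x"
      by (subst interval_lebesgue_integral_diff)
         (auto intro!: interval_integrable_isCont
               simp: interval_lebesgue_integral_of_real integral_cos [OF \<open>x \<noteq> 0\<close>] mult.commute[of _ x])
    finally show "(CLBINT t:{-u..u}. 1 - iexp (t * x)) = 2 * (u  - sin (u * x) / x)"
      by (simp add: field_simps)
  qed
    interpret P: pair_sigma_finite M lborel ..
    have Mn1 [simp]: "measure M UNIV = 1" by (metis prob_space space_eq_univ)
    have Mn2 [simp]: "\<And>x. complex_integrable M (\<lambda>t. exp (\<i> * complex_of_real (x * t)))"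
      by (rule integrable_const_bound [where B = 1], auto)
    have Mn3: "set_integrable (M \<Otimes>\<^sub>M lborel) (UNIV \<times> {- u..u}) (\<lambda>a. 1 - exp (\<i> * complex_of_real (snd a * fst a)))"
      using \<open>0 < u\<close>
      unfolding set_integrable_def
      by (intro integrableI_bounded_set_indicator [where B="2"])
         (auto simp: lborel.emeasure_pair_measure_Times ennreal_mult_less_top not_less top_unique
               split: split_indicator
               intro!: order_trans [OF norm_triangle_ineq4])
    have "(CLBINT t:{-u..u}. 1 - char M t) =
        (CLBINT t:{-u..u}. (CLINT x | M. 1 - iexp (t * x)))"
      unfolding char_def by (rule set_lebesgue_integral_cong, auto simp del: of_real_mult)
    also have "\<dots> = (CLBINT t. (CLINT x | M. indicator {-u..u} t *\<^sub>R (1 - iexp (t * x))))"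
      unfolding set_lebesgue_integral_def
      by (rule Bochner_Integration.integral_cong) (auto split: split_indicator)
    also have "\<dots> = (CLINT x | M. (CLBINT t:{-u..u}. 1 - iexp (t * x)))"
      using Mn3 by (subst P.Fubini_integral) (auto simp: indicator_times split_beta' set_integrable_def set_lebesgue_integral_def)
    also have "\<dots> = (CLINT x | M. (if x = 0 then 0 else 2 * (u  - sin (u * x) / x)))"
      using \<open>u > 0\<close> by (intro Bochner_Integration.integral_cong, auto simp add: * simp del: of_real_mult)
    also have "\<dots> = (LINT x | M. (if x = 0 then 0 else 2 * (u  - sin (u * x) / x)))"
      by (rule integral_complex_of_real)
    finally have "Re (CLBINT t:{-u..u}. 1 - char M t) =
       (LINT x | M. (if x = 0 then 0 else 2 * (u  - sin (u * x) / x)))" by simp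
    also have "\<dots> \<ge> (LINT x : {x. abs x \<ge> 2 / u} | M. u)"
    proof -
      have "complex_integrable M (\<lambda>x. CLBINT t:{-u..u}. 1 - iexp (snd (x, t) * fst (x, t)))"
        using Mn3 unfolding set_integrable_def set_lebesgue_integral_def
        by (intro P.integrable_fst) (simp add: indicator_times split_beta')
      hence "complex_integrable M (\<lambda>x. if x = 0 then 0 else 2 * (u  - sin (u * x) / x))"
        using \<open>u > 0\<close>
        unfolding set_integrable_def
        by (subst Bochner_Integration.integrable_cong) (auto simp add: * simp del: of_real_mult)
      hence **: "integrable M (\<lambda>x. if x = 0 then 0 else 2 * (u  - sin (u * x) / x))"
        unfolding complex_of_real_integrable_eq .
      have "2 * sin x \<le> x" if "2 \<le> x" for x :: real
        by (rule order_trans[OF _ \<open>2 \<le> x\<close>]) auto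
      moreover have "x \<le> 2 * sin x" if "x \<le> - 2" for x :: real
        by (rule order_trans[OF \<open>x \<le> - 2\<close>]) auto
      moreover have "x < 0 \<Longrightarrow> x \<le> sin x" for x :: real
        using sin_x_le_x[of "-x"] by simp
      ultimately show ?thesis
        using \<open>u > 0\<close> unfolding set_lebesgue_integral_def
        by (intro integral_mono [OF _ **])
           (auto simp: divide_simps sin_x_le_x mult.commute[of u] mult_neg_pos top_unique less_top[symmetric]
                 split: split_indicator)
    qed
    also (xtrans) have "(LINT x : {x. abs x \<ge> 2 / u} | M. u) = u * measure M {x. abs x \<ge> 2 / u}"
      unfolding set_lebesgue_integral_def
      by (simp add: emeasure_eq_measure)
    finally show ?thesis .
qed

lemma cmod_one_minus_exp:
  fixes a b :: real
  assumes "a \<le> 0"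
  shows "cmod (1 - exp (Complex a b)) \<le> - a + \<bar>b\<bar>"
proof -
  have e: "exp (Complex a b) = complex_of_real (exp a) * iexp b"
    by (simp add: complex_eq_iff exp_Euler cos_of_real sin_of_real Re_exp Im_exp)
  have "1 - exp (Complex a b) = complex_of_real (1 - exp a) + complex_of_real (exp a) * (1 - iexp b)"
    by (simp add: e algebra_simps)
  hence "cmod (1 - exp (Complex a b)) \<le> cmod (complex_of_real (1 - exp a)) + cmod (complex_of_real (exp a) * (1 - iexp b))"
    by (metis norm_triangle_ineq)
  also have "cmod (complex_of_real (1 - exp a)) = 1 - exp a"
    using assms by (simp only: norm_of_real) simp
  also have "cmod (complex_of_real (exp a) * (1 - iexp b)) = exp a * cmod (iexp b - 1)"
    by (simp add: norm_mult norm_minus_commute)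
  also have "cmod (iexp b - 1) \<le> \<bar>b\<bar>"
    using iexp_approx1[of b 0] by simp
  hence "exp a * cmod (iexp b - 1) \<le> 1 * \<bar>b\<bar>"
    using assms by (intro mult_mono) auto
  moreover have "1 - exp a \<le> - a" using exp_ge_add_one_self[of a] by linarith
  ultimately show ?thesis by linarith
qed

lemma stable_tail:
  assumes st: "stable_law \<alpha> \<sigma> 1 0 N" and a: "0 < \<alpha>" and t: "0 < t"
  shows "measure N {x. t \<le> \<bar>x\<bar>} \<le> 2 powr (1 + \<alpha>) * (1 + \<bar>tan (pi * \<alpha> / 2)\<bar>) * \<sigma> powr \<alpha> / t powr \<alpha>"
proof -
  interpret real_distribution N using st unfolding stable_law_def by auto
  define c where "c = tan (pi * \<alpha> / 2)"
  define u where "u = 2 / t"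
  have u: "u > 0" using t by (simp add: u_def)
  define K where "K = (1 + \<bar>c\<bar>) * \<sigma> powr \<alpha> * u powr \<alpha>"
  have K0: "K \<ge> 0" unfolding K_def by simp
  have pt: "cmod (1 - char N \<theta>) \<le> K" if "\<theta> \<in> {-u..u}" for \<theta>
  proof -
    define s where "s = \<sigma> powr \<alpha> * \<bar>\<theta>\<bar> powr \<alpha>"
    have s0: "s \<ge> 0" by (simp add: s_def)
    have arg: "- complex_of_real (\<sigma> powr \<alpha> * \<bar>\<theta>\<bar> powr \<alpha>)
               * (1 - \<i> * complex_of_real (1 * sgn \<theta> * tan (pi * \<alpha> / 2)))
             + \<i> * complex_of_real (0 * \<theta>) = Complex (-s) (s * (sgn \<theta> * c))"
      by (simp add: complex_eq_iff s_def c_def)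
    have "char N \<theta> = exp (Complex (-s) (s * (sgn \<theta> * c)))"
      using st unfolding stable_law_def arg[symmetric] by blast
    hence "cmod (1 - char N \<theta>) \<le> s + \<bar>s * (sgn \<theta> * c)\<bar>"
      using cmod_one_minus_exp[of "-s"] s0 by simp
    also have "\<dots> \<le> s + s * \<bar>c\<bar>"
      using s0 by (auto simp: abs_mult abs_sgn_eq mult_le_cancel_left1)
    also have "\<dots> = (1 + \<bar>c\<bar>) * s" by (simp add: algebra_simps)
    also have "s \<le> \<sigma> powr \<alpha> * u powr \<alpha>"
      unfolding s_def using that a by (intro mult_left_mono powr_mono2) auto
    hence "(1 + \<bar>c\<bar>) * s \<le> K" unfolding K_def
      by (simp add: mult.assoc mult_left_mono)
    finally show ?thesis .
  qed
  have meas: "(\<lambda>t. indicator {-u..u} t *\<^sub>R (1 - char N t)) \<in> borel_measurable lborel"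
    by measurable
  have int0: "integrable lborel (\<lambda>t. indicator {-u..u} t *\<^sub>R cmod (1 - char N t))"
    by (intro borel_integrable_compact[OF compact_Icc] continuous_at_imp_continuous_on
                continuous_intros ballI isCont_char continuous_intros)
  have eqn: "(\<lambda>t. norm (indicator {-u..u} t *\<^sub>R (1 - char N t))) = (\<lambda>t. indicator {-u..u} t *\<^sub>R cmod (1 - char N t))"
    by (auto split: split_indicator)
  have int1: "integrable lborel (\<lambda>t. norm (indicator {-u..u} t *\<^sub>R (1 - char N t)))"
    unfolding eqn by (rule int0)
  have int2: "integrable lborel (\<lambda>t. indicator {-u..u} t * K)"
    by (auto simp: emeasure_lborel_Icc_eq)
  have "u * measure N {x. abs x \<ge> 2 / u} \<le> Re (CLBINT t:{-u..u}. 1 - char N t)"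
    by (rule main_bound[OF u])
  also have "\<dots> \<le> cmod (CLBINT t:{-u..u}. 1 - char N t)" by (rule complex_Re_le_cmod)
  also have "\<dots> \<le> (\<integral>t. norm (indicator {-u..u} t *\<^sub>R (1 - char N t)) \<partial>lborel)"
    unfolding set_lebesgue_integral_def by (rule integral_norm_bound)
  also have "\<dots> \<le> (\<integral>t. indicator {-u..u} t * K \<partial>lborel)"
    using pt by (intro integral_mono[OF int1 int2]) (auto split: split_indicator)
  also have "\<dots> = 2 * u * K" using u by (simp add: emeasure_lborel_Icc_eq)
  finally have "u * measure N {x. abs x \<ge> 2 / u} \<le> u * (2 * K)" by simp
  hence "measure N {x. abs x \<ge> 2/u} \<le> 2 * K" using u by (simp add: mult_le_cancel_left_pos)
  hence "measure N {x. abs x \<ge> t} \<le> 2 * K" using t by (simp add: u_def)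
  also have "2 * K = 2 powr (1 + \<alpha>) * (1 + \<bar>c\<bar>) * \<sigma> powr \<alpha> / t powr \<alpha>"
    unfolding K_def u_def using t by (simp add: powr_divide powr_add field_simps)
  finally show ?thesis by (simp add: c_def)
qed

lemma Zq_meas[measurable]: "Zq k \<in> borel_measurable borel"
  unfolding Zq_def Ytr_def by measurable

lemma Ytr_nonneg: "0 \<le> Ytr k x"
  unfolding Ytr_def by (cases "x \<in> {2 ^ k .. 4 ^ k}") (auto intro: order_trans[OF zero_le_power[of "2::real" k]])

lemma Zq_nonneg: "0 \<le> Zq k x"
  unfolding Zq_def by (intro sum_nonneg) auto

lemma Zq_le_Ytr: "Zq k x \<le> Ytr k x"
proof -
  define y where "y = Ytr k x"
  have y0: "0 \<le> y" by (simp add: y_def Ytr_nonneg)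
  define J where "J = nat \<lfloor>4 ^ k * y\<rfloor>"
  have tm: "(real j / 4 ^ k) * indicator {real j / 4 ^ k ..< (real j + 1) / 4 ^ k} y
              \<le> (if j = J then y else 0)" for j :: nat
  proof (cases "y \<in> {real j / 4 ^ k ..< (real j + 1) / 4 ^ k}")
    case True
    hence a: "real j \<le> 4 ^ k * y" "4 ^ k * y < real j + 1"
      by (auto simp: field_simps)
    hence "\<lfloor>4 ^ k * y\<rfloor> = int j" by (simp add: floor_eq_iff)
    hence "j = J" by (simp add: J_def)
    thus ?thesis using True by auto
  next
    case False thus ?thesis using y0 by auto
  qed
  have "Zq k x \<le> (\<Sum>j\<in>{8 ^ k .. 16 ^ k :: nat}. (if j = J then y else 0))"
    unfolding Zq_def y_def[symmetric] by (intro sum_mono tm)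
  also have "\<dots> \<le> y" using y0 by (simp add: sum.delta)
  finally show ?thesis by (simp add: y_def)
qed

lemma Zq_le: "Zq k x \<le> 4 ^ k"
  using Zq_le_Ytr[of k x] unfolding Ytr_def by (cases "x \<in> {2 ^ k .. 4 ^ k}") (auto intro: order_trans[OF _ zero_le_power[of "4::real" k]])

lemma Ytr_sq_bound:
  "(Ytr k x)\<^sup>2 \<le> (\<Sum>j\<in>{k..2*k}. 4 ^ (j + 1) * indicator {2 ^ j ..} x)"
proof (cases "x \<in> {2 ^ k .. 4 ^ k}")
  case False
  thus ?thesis by (auto simp: Ytr_def intro!: sum_nonneg split: split_indicator)
next
  case True
  hence x: "2 ^ k \<le> x" "x \<le> 4 ^ k" by auto
  have xpos: "x > 0" using x(1) by (smt (verit) zero_less_power)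
  define j where "j = nat \<lfloor>log 2 x\<rfloor>"
  have lk: "real k \<le> log 2 x" using x(1) xpos
    by (simp add: le_log_iff powr_realpow)
  have x4: "x \<le> 2 ^ (2*k)" using x(2) by (simp add: power_mult)
  have lk2: "log 2 x \<le> real (2*k)" using x4 xpos
    by (simp add: log_le_iff powr_realpow del: of_nat_mult)
  have jk: "k \<le> j" "j \<le> 2*k" using lk lk2 unfolding j_def
    by (simp_all add: le_nat_floor floor_le_iff nat_le_iff)
  have "real j \<le> log 2 x" unfolding j_def using lk by (simp add: of_nat_nat)
  hence xj: "2 ^ j \<le> x" using xpos by (simp add: le_log_iff powr_realpow)
  have "log 2 x < real (j + 1)" unfolding j_def using lk by (simp add: of_nat_nat) linarith
  hence "x < 2 powr real (j+1)" using xpos by (simp add: log_less_iff del: of_nat_add)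
  hence xj1: "x < 2 ^ (j+1)" by (simp only: powr_realpow[of 2, simplified])
  have "(Ytr k x)\<^sup>2 = x\<^sup>2" using True by (simp add: Ytr_def)
  also have "\<dots> \<le> (2 ^ (j+1))\<^sup>2" using xj1 xpos by (intro power_mono) auto
  also have "\<dots> = 4 ^ (j + 1) * indicator {2 ^ j ..} x"
    using xj by (simp add: power_mult_distrib[symmetric] power_mult[symmetric] mult.commute)
       (metis power_mult numeral_Bit0 power2_eq_square mult_2_right power_mult_distrib) 
  also have "\<dots> \<le> (\<Sum>j\<in>{k..2*k}. 4 ^ (j + 1) * indicator {2 ^ j ..} x)"
    by (rule member_le_sum[where i=j and A="{k..2*k}"]) (use jk in \<open>auto split: split_indicator\<close>)
  finally show ?thesis .
qed

definition "Aconst \<alpha> = 2 powr (1 + \<alpha>) * (1 + \<bar>tan (pi * \<alpha> / 2)\<bar>)"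
definition "rconst \<alpha> = 4 / 2 powr \<alpha>"

lemma Zq_sq_bound:
  "(Zq k x)\<^sup>2 \<le> (\<Sum>j\<in>{k..2*k}. 4 ^ (j + 1) * indicator {2 ^ j ..} x)"
proof -
  have "(Zq k x)\<^sup>2 \<le> (Ytr k x)\<^sup>2"
    using Zq_nonneg Zq_le_Ytr by (intro power_mono) auto
  thus ?thesis using Ytr_sq_bound[of k x] by linarith
qed

lemma geom_bound:
  fixes r :: real assumes "r > 1"
  shows "(\<Sum>j\<in>{k..2*k}. r ^ j) \<le> r ^ (2*k+1) / (r - 1)"
proof -
  have "(\<Sum>j\<in>{k..2*k}. r ^ j) \<le> (\<Sum>j<2*k+1. r ^ j)"
    using assms by (intro sum_mono2) auto
  also have "\<dots> = (r ^ (2*k+1) - 1) / (r - 1)"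
    using assms by (intro geometric_sum) auto
  also have "\<dots> \<le> r ^ (2*k+1) / (r - 1)"
    using assms by (simp add: divide_right_mono)
  finally show ?thesis .
qed

lemma Zq_moment:
  assumes st: "stable_law \<alpha> \<sigma> 1 0 N" and a: "0 < \<alpha>" "\<alpha> < 2"
  shows "(\<integral>x. (Zq k x)\<^sup>2 \<partial>N) \<le> 4 * Aconst \<alpha> * \<sigma> powr \<alpha> * rconst \<alpha> ^ (2*k+1) / (rconst \<alpha> - 1)"
proof -
  interpret real_distribution N using st unfolding stable_law_def by auto
  have "2 powr \<alpha> < 2 powr (2::real)" by (subst powr_less_cancel_iff) (use a in auto)
  moreover have "2 powr (2::real) = 4" by simp
  ultimately have r1: "rconst \<alpha> > 1" unfolding rconst_def by simp
  define s where "s = \<sigma> powr \<alpha>"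
  have s0: "s \<ge> 0" by (simp add: s_def)
  have A0: "Aconst \<alpha> \<ge> 0" by (simp add: Aconst_def)
  have intl: "integrable N (\<lambda>x. (Zq k x)\<^sup>2)"
    apply (rule integrable_const_bound[where B="(4^k)^2"])
    using Zq_nonneg Zq_le by (auto intro!: power_mono)
  have intr: "integrable N (\<lambda>x. (4::real) ^ (j + 1) * indicator {2 ^ j ..} x)" for j :: nat
    by (intro integrable_mult_right integrable_real_indicator) (auto simp: emeasure_eq_measure)
  have "(\<integral>x. (Zq k x)\<^sup>2 \<partial>N) \<le> (\<integral>x. (\<Sum>j\<in>{k..2*k}. 4 ^ (j + 1) * indicator {2 ^ j ..} x) \<partial>N)"
    by (intro integral_mono intl Bochner_Integration.integrable_sum intr Zq_sq_bound)
  also have "\<dots> = (\<Sum>j\<in>{k..2*k}. 4 ^ (j + 1) * measure N {2 ^ j ..})"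
    by (subst Bochner_Integration.integral_sum) (auto intro!: intr integrable_real_indicator simp: emeasure_eq_measure)
  also have "\<dots> \<le> (\<Sum>j\<in>{k..2*k}. 4 * Aconst \<alpha> * s * rconst \<alpha> ^ j)"
  proof (intro sum_mono)
    fix j assume "j \<in> {k..2*k}"
    have "measure N {2 ^ j ..} \<le> measure N {x. 2 ^ j \<le> \<bar>x\<bar>}"
      by (intro finite_measure_mono) auto
    also have "\<dots> \<le> Aconst \<alpha> * s / (2 ^ j) powr \<alpha>"
      using stable_tail[OF st a(1), of "2^j"] by (simp add: Aconst_def s_def)
    finally have m: "measure N {2 ^ j ..} \<le> Aconst \<alpha> * s / (2 ^ j) powr \<alpha>" .
    have "4 ^ (j + 1) * measure N {2 ^ j ..} \<le> 4 ^ (j + 1) * (Aconst \<alpha> * s / (2 ^ j) powr \<alpha>)"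
      by (intro mult_left_mono m) auto
    also have "\<dots> = 4 * Aconst \<alpha> * s * rconst \<alpha> ^ j"
      unfolding rconst_def
      by (simp add: powr_realpow[symmetric] powr_powr power_divide powr_power mult.commute field_simps)
    finally show "4 ^ (j + 1) * measure N {2 ^ j ..} \<le> 4 * Aconst \<alpha> * s * rconst \<alpha> ^ j" .
  qed
  also have "\<dots> = 4 * Aconst \<alpha> * s * (\<Sum>j\<in>{k..2*k}. rconst \<alpha> ^ j)"
    by (simp add: sum_distrib_left)
  also have "\<dots> \<le> 4 * Aconst \<alpha> * s * (rconst \<alpha> ^ (2*k+1) / (rconst \<alpha> - 1))"
    using A0 s0 by (intro mult_left_mono geom_bound r1) auto
  finally show ?thesis by (simp add: s_def)
qed

lemma AE_summable_abs:
  fixes w :: "nat \<Rightarrow> 'a \<Rightarrow> real"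
  assumes int: "\<And>k. integrable M (w k)"
    and sm: "summable (\<lambda>k. \<integral>x. \<bar>w k x\<bar> \<partial>M)"
  shows "AE x in M. summable (\<lambda>k. \<bar>w k x\<bar>)"
proof -
  have meas[measurable]: "\<And>k. w k \<in> borel_measurable M" using int by auto
  have "(\<integral>\<^sup>+ x. (\<Sum>k. ennreal \<bar>w k x\<bar>) \<partial>M) = (\<Sum>k. \<integral>\<^sup>+ x. ennreal \<bar>w k x\<bar> \<partial>M)"
    by (intro nn_integral_suminf) auto
  also have "\<dots> = (\<Sum>k. ennreal (\<integral>x. \<bar>w k x\<bar> \<partial>M))"
    by (intro arg_cong[where f=suminf] ext nn_integral_eq_integral integrable_abs int) auto
  also have "\<dots> \<noteq> \<infinity>"
    using sm by (simp add: ennreal_suminf_neq_top integral_nonneg_AE)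
  finally have fin: "(\<integral>\<^sup>+ x. (\<Sum>k. ennreal \<bar>w k x\<bar>) \<partial>M) \<noteq> \<infinity>" .
  have "AE x in M. (\<Sum>k. ennreal \<bar>w k x\<bar>) \<noteq> \<infinity>"
    by (rule nn_integral_PInf_AE[OF _ fin]) measurable
  thus ?thesis
  proof eventually_elim
    case (elim x)
    show ?case by (metis abs_ge_zero elim infinity_ennreal_def summable_suminf_not_top)
  qed
qed

lemma series_L1:
  fixes w :: "nat \<Rightarrow> 'a \<Rightarrow> real"
  assumes int: "\<And>k. integrable M (w k)"
    and sm: "summable (\<lambda>k. \<integral>x. \<bar>w k x\<bar> \<partial>M)"
  shows "\<exists>V. V \<in> borel_measurable M \<and> integrable M V \<and>
     (\<lambda>K. \<integral>x. \<bar>(\<Sum>k\<le>K. w k x) - V x\<bar> \<partial>M) \<longlonglongrightarrow> 0 \<and>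
     (\<integral>x. \<bar>V x\<bar> \<partial>M) \<le> (\<Sum>k. \<integral>x. \<bar>w k x\<bar> \<partial>M)"
proof -
  have meas[measurable]: "\<And>k. w k \<in> borel_measurable M" using int by auto
  have ae: "AE x in M. summable (\<lambda>k. \<bar>w k x\<bar>)" by (rule AE_summable_abs[OF int sm])
  define V where "V x = (\<Sum>k. w k x)" for x
  have intV: "integrable M V" unfolding V_def
    by (rule integrable_suminf[OF int]) (use ae sm in auto)
  have aeK: "AE x in M. summable (\<lambda>i. norm \<bar>w (i + K) x\<bar>)" for K
    using ae by eventually_elim (drule summable_ignore_initial_segment[of _ K], simp)
  have smK: "summable (\<lambda>i. \<integral>x. norm \<bar>w (i + K) x\<bar> \<partial>M)" for K
    using summable_ignore_initial_segment[OF sm, of K] by simp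
  have tail_int: "integrable M (\<lambda>x. \<Sum>i. \<bar>w (i + K) x\<bar>)" for K
    by (rule integrable_suminf[OF _ aeK smK]) (auto intro: integrable_abs int)
  have tail_eq: "(\<integral>x. (\<Sum>i. \<bar>w (i + K) x\<bar>) \<partial>M) = (\<Sum>i. \<integral>x. \<bar>w (i + K) x\<bar> \<partial>M)" for K
    by (rule integral_suminf[OF _ aeK smK]) (auto intro: integrable_abs int)
  have bnd: "(\<integral>x. \<bar>(\<Sum>k\<le>K. w k x) - V x\<bar> \<partial>M) \<le> (\<Sum>i. \<integral>x. \<bar>w (i + Suc K) x\<bar> \<partial>M)" for K
  proof -
    have "(\<integral>x. \<bar>(\<Sum>k\<le>K. w k x) - V x\<bar> \<partial>M) \<le> (\<integral>x. (\<Sum>i. \<bar>w (i + Suc K) x\<bar>) \<partial>M)"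
    proof (rule integral_mono_AE)
      show "integrable M (\<lambda>x. \<bar>(\<Sum>k\<le>K. w k x) - V x\<bar>)"
        using intV int by (intro integrable_abs Bochner_Integration.integrable_diff Bochner_Integration.integrable_sum) auto
      show "integrable M (\<lambda>x. \<Sum>i. \<bar>w (i + Suc K) x\<bar>)" by (rule tail_int)
      show "AE x in M. \<bar>(\<Sum>k\<le>K. w k x) - V x\<bar> \<le> (\<Sum>i. \<bar>w (i + Suc K) x\<bar>)"
        using ae
      proof eventually_elim
        case (elim x)
        have s: "summable (\<lambda>k. w k x)" by (rule summable_rabs_cancel[OF elim])
        have "V x = (\<Sum>i. w (i + Suc K) x) + (\<Sum>k<Suc K. w k x)"
          unfolding V_def by (rule suminf_split_initial_segment[OF s])
        moreover have "(\<Sum>k<Suc K. w k x) = (\<Sum>k\<le>K. w k x)" by (simp only: lessThan_Suc_atMost)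
        ultimately have "\<bar>(\<Sum>k\<le>K. w k x) - V x\<bar> = \<bar>\<Sum>i. w (i + Suc K) x\<bar>"
          by simp
        also have "\<dots> \<le> (\<Sum>i. \<bar>w (i + Suc K) x\<bar>)"
          by (rule summable_rabs[OF summable_ignore_initial_segment[OF elim, of "Suc K"]])
        finally show ?case .
      qed
    qed
    thus ?thesis by (simp only: tail_eq)
  qed
  have lim: "(\<lambda>K. \<Sum>i. \<integral>x. \<bar>w (i + Suc K) x\<bar> \<partial>M) \<longlonglongrightarrow> 0"
  proof -
    have "(\<lambda>K. \<Sum>i. \<integral>x. \<bar>w (i + K) x\<bar> \<partial>M) \<longlonglongrightarrow> 0"
      by (rule suminf_exist_split2[OF sm])
    thus ?thesis by (rule LIMSEQ_Suc)
  qed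
  have conv: "(\<lambda>K. \<integral>x. \<bar>(\<Sum>k\<le>K. w k x) - V x\<bar> \<partial>M) \<longlonglongrightarrow> 0"
  proof (rule tendsto_sandwich[OF _ _ tendsto_const lim])
    show "\<forall>\<^sub>F K in sequentially. 0 \<le> (\<integral>x. \<bar>(\<Sum>k\<le>K. w k x) - V x\<bar> \<partial>M)"
      by (intro always_eventually allI integral_nonneg_AE) auto
    show "\<forall>\<^sub>F K in sequentially. (\<integral>x. \<bar>(\<Sum>k\<le>K. w k x) - V x\<bar> \<partial>M) \<le> (\<Sum>i. \<integral>x. \<bar>w (i + Suc K) x\<bar> \<partial>M)"
      by (intro always_eventually allI bnd)
  qed
  have "(\<integral>x. \<bar>V x\<bar> \<partial>M) \<le> (\<integral>x. (\<Sum>i. \<bar>w (i + 0) x\<bar>) \<partial>M)"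
  proof (rule integral_mono_AE)
    show "integrable M (\<lambda>x. \<bar>V x\<bar>)" using intV by auto
    show "integrable M (\<lambda>x. \<Sum>i. \<bar>w (i + 0) x\<bar>)" by (rule tail_int)
    show "AE x in M. \<bar>V x\<bar> \<le> (\<Sum>i. \<bar>w (i + 0) x\<bar>)"
      using ae by eventually_elim (simp only: add_0_right V_def, rule summable_rabs)
  qed
  hence "(\<integral>x. \<bar>V x\<bar> \<partial>M) \<le> (\<Sum>k. \<integral>x. \<bar>w k x\<bar> \<partial>M)"
    using tail_eq[of 0] by (simp only: add_0_right)
  with intV conv show ?thesis by (intro exI[of _ V]) auto
qed

lemma (in prob_space) orth_sum:
  fixes U :: "nat \<Rightarrow> 'a \<Rightarrow> real" and c :: "nat \<Rightarrow> real"
  assumes S: "finite S"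
    and meas: "\<And>m. m \<in> S \<Longrightarrow> U m \<in> borel_measurable M"
    and bnd: "\<And>m \<omega>. m \<in> S \<Longrightarrow> \<omega> \<in> space M \<Longrightarrow> \<bar>U m \<omega>\<bar> \<le> B"
    and orth: "\<And>m m'. m \<in> S \<Longrightarrow> m' \<in> S \<Longrightarrow> m \<noteq> m' \<Longrightarrow> (\<integral>\<omega>. U m \<omega> * U m' \<omega> \<partial>M) = 0"
  shows "(\<integral>\<omega>. (\<Sum>m\<in>S. c m * U m \<omega>)\<^sup>2 \<partial>M) = (\<Sum>m\<in>S. (c m)\<^sup>2 * (\<integral>\<omega>. (U m \<omega>)\<^sup>2 \<partial>M))"
proof -
  have intp: "integrable M (\<lambda>\<omega>. U m \<omega> * U m' \<omega>)" if "m \<in> S" "m' \<in> S" for m m'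
  proof (rule integrable_const_bound[where B="B * B"])
    show "AE \<omega> in M. norm (U m \<omega> * U m' \<omega>) \<le> B * B"
    proof (rule AE_I2)
      fix \<omega> assume "\<omega> \<in> space M"
      hence "\<bar>U m \<omega>\<bar> \<le> B" "\<bar>U m' \<omega>\<bar> \<le> B" using bnd that by auto
      thus "norm (U m \<omega> * U m' \<omega>) \<le> B * B"
        by (simp add: abs_mult mult_mono')
    qed
    show "(\<lambda>\<omega>. U m \<omega> * U m' \<omega>) \<in> borel_measurable M" using meas that by auto
  qed
  have "(\<lambda>\<omega>. (\<Sum>m\<in>S. c m * U m \<omega>)\<^sup>2) = (\<lambda>\<omega>. \<Sum>m\<in>S. \<Sum>m'\<in>S. (c m * c m') * (U m \<omega> * U m' \<omega>))"
    by (auto simp: power2_eq_square sum_product algebra_simps)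
  hence "(\<integral>\<omega>. (\<Sum>m\<in>S. c m * U m \<omega>)\<^sup>2 \<partial>M) = (\<Sum>m\<in>S. \<Sum>m'\<in>S. (c m * c m') * (\<integral>\<omega>. U m \<omega> * U m' \<omega> \<partial>M))"
    using intp by (simp add: Bochner_Integration.integral_sum Bochner_Integration.integrable_sum)
  also have "\<dots> = (\<Sum>m\<in>S. \<Sum>m'\<in>S. (if m' = m then (c m)\<^sup>2 * (\<integral>\<omega>. (U m \<omega>)\<^sup>2 \<partial>M) else 0))"
    by (intro sum.cong refl) (auto simp: orth power2_eq_square)
  also have "\<dots> = (\<Sum>m\<in>S. (c m)\<^sup>2 * (\<integral>\<omega>. (U m \<omega>)\<^sup>2 \<partial>M))"
    using S by (simp add: sum.delta)
  finally show ?thesis .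
qed

definition cnt :: "nat \<Rightarrow> nat \<Rightarrow> nat \<Rightarrow> nat" where
  "cnt n D m = card {i. i < n \<and> i \<le> m \<and> m < i + D}"

lemma cnt_le: "cnt n D m \<le> n"
proof -
  have "cnt n D m \<le> card {..<n}" unfolding cnt_def by (intro card_mono) auto
  thus ?thesis by simp
qed

lemma double_sum_reindex:
  fixes g :: "nat \<Rightarrow> real"
  shows "(\<Sum>i<n. \<Sum>j<D. g (i + j)) = (\<Sum>m<n+D. real (cnt n D m) * g m)"
proof -
  have inner: "(\<Sum>j<D. g (i + j)) = (\<Sum>m<n+D. (if i \<le> m \<and> m < i + D then g m else 0))" if "i < n" for i
  proof -
    have "(\<Sum>j<D. g (i + j)) = (\<Sum>m\<in>{i..<i+D}. g m)"
      using sum.shift_bounds_nat_ivl[of g 0 i D] by (simp add: lessThan_atLeast0 add.commute)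
    also have "\<dots> = (\<Sum>m\<in>{..<n+D} \<inter> {m. i \<le> m \<and> m < i + D}. g m)"
      using that by (intro sum.cong) auto
    also have "\<dots> = (\<Sum>m<n+D. (if i \<le> m \<and> m < i + D then g m else 0))"
      by (simp add: sum.inter_restrict)
    finally show ?thesis .
  qed
  have "(\<Sum>i<n. \<Sum>j<D. g (i + j)) = (\<Sum>i<n. \<Sum>m<n+D. (if i \<le> m \<and> m < i + D then g m else 0))"
    by (intro sum.cong refl inner) auto
  also have "\<dots> = (\<Sum>m<n+D. \<Sum>i<n. (if i \<le> m \<and> m < i + D then g m else 0))"
    by (rule sum.swap)
  also have "\<dots> = (\<Sum>m<n+D. real (cnt n D m) * g m)"
  proof (intro sum.cong refl)
    fix m
    have "(\<Sum>i<n. (if i \<le> m \<and> m < i + D then g m else 0)) = (\<Sum>i\<in>{..<n} \<inter> {i. i \<le> m \<and> m < i + D}. g m)"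
      by (subst sum.inter_restrict) auto
    also have "\<dots> = real (card ({..<n} \<inter> {i. i \<le> m \<and> m < i + D})) * g m" by simp
    also have "{..<n} \<inter> {i. i \<le> m \<and> m < i + D} = {i. i < n \<and> i \<le> m \<and> m < i + D}" by auto
    finally show "(\<Sum>i<n. (if i \<le> m \<and> m < i + D then g m else 0)) = real (cnt n D m) * g m"
      by (simp add: cnt_def)
  qed
  finally show ?thesis .
qed

lemma cnt_sum: "(\<Sum>m<n+D. real (cnt n D m)) = real n * real D"
  using double_sum_reindex[where g="\<lambda>_. 1" and n=n and D=D] by simp

lemma cnt_sq_sum:
  assumes "D > 0"
  shows "(\<Sum>m<n+D. (real (cnt n D m) / real D)\<^sup>2) \<le> (real n)\<^sup>2 / real D"
proof -
  have "(\<Sum>m<n+D. (real (cnt n D m) / real D)\<^sup>2) \<le> (\<Sum>m<n+D. (real n / real D) * (real (cnt n D m) / real D))"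
    using cnt_le assms by (intro sum_mono) (auto simp: power2_eq_square intro!: mult_right_mono divide_right_mono)
  also have "\<dots> = (real n / real D) * ((\<Sum>m<n+D. real (cnt n D m)) / real D)"
    by (simp add: sum_distrib_left sum_divide_distrib)
  also have "\<dots> = (real n)\<^sup>2 / real D" using assms by (simp add: cnt_sum power2_eq_square)
  finally show ?thesis .
qed

lemma funpow_measurable:
  assumes "T \<in> M \<rightarrow>\<^sub>M M" shows "(T ^^ j) \<in> M \<rightarrow>\<^sub>M M"
  by (induction j) (auto intro: measurable_compose[OF _ assms])

lemma distr_funpow:
  assumes T: "T \<in> M \<rightarrow>\<^sub>M M" and inv: "distr M M T = M"
  shows "distr M M (T ^^ j) = M"
proof (induction j)
  case 0 thus ?case by (simp add: distr_id[unfolded id_def])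
next
  case (Suc j)
  have "distr M M (T ^^ Suc j) = distr M M ((T ^^ j) \<circ> T)" by (simp only: funpow_Suc_right)
  also have "\<dots> = distr (distr M M T) M (T ^^ j)"
    by (rule distr_distr[symmetric, OF funpow_measurable[OF T] T])
  also have "\<dots> = M" using inv Suc by simp
  finally show ?case .
qed

lemma pps_facts:
  assumes "ergodic_aperiodic_pps M T"
  shows "prob_space M" "T \<in> M \<rightarrow>\<^sub>M M" "distr M M (T ^^ j) = M"
  using assms distr_funpow[of T M j] unfolding ergodic_aperiodic_pps_def by auto

lemma invariant_integral:
  fixes g :: "_ \<Rightarrow> real"
  assumes "ergodic_aperiodic_pps M T" and g: "g \<in> borel_measurable M"
  shows "(\<integral>x. g ((T ^^ j) x) \<partial>M) = (\<integral>x. g x \<partial>M)"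
    and "integrable M (\<lambda>x. g ((T ^^ j) x)) \<longleftrightarrow> integrable M g"
proof -
  note pf = pps_facts[OF assms(1)]
  have Tj: "(T ^^ j) \<in> M \<rightarrow>\<^sub>M M" by (rule funpow_measurable[OF pf(2)])
  have "(\<integral>x. g x \<partial>(distr M M (T ^^ j))) = (\<integral>x. g ((T ^^ j) x) \<partial>M)"
    by (rule integral_distr[OF Tj g])
  thus "(\<integral>x. g ((T ^^ j) x) \<partial>M) = (\<integral>x. g x \<partial>M)" using pf(3)[of j] by simp
  have "integrable (distr M M (T ^^ j)) g \<longleftrightarrow> integrable M (\<lambda>x. g ((T ^^ j) x))"
    by (rule integrable_distr_eq[OF Tj g])
  thus "integrable M (\<lambda>x. g ((T ^^ j) x)) \<longleftrightarrow> integrable M g" using pf(3)[of j] by simp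
qed

definition FF :: "('a \<Rightarrow> 'a) \<Rightarrow> (nat \<Rightarrow> 'a \<Rightarrow> real) \<Rightarrow> 'a \<Rightarrow> (nat \<times> nat \<Rightarrow> real)" where
  "FF T f x = (\<lambda>i\<in>adm_index. f (fst i) ((T ^^ snd i) x))"

definition GG :: "(nat \<Rightarrow> nat \<Rightarrow> 'b \<Rightarrow> real) \<Rightarrow> 'b \<Rightarrow> (nat \<times> nat \<Rightarrow> real)" where
  "GG X \<omega> = (\<lambda>i\<in>adm_index. Zq (fst i) (X (fst i) (snd i + 1) \<omega>))"

lemma tri_facts:
  assumes "triangular_array \<alpha> P X"
  shows "prob_space P"
    and "\<And>k m. k \<ge> 1 \<Longrightarrow> m \<ge> 1 \<Longrightarrow> X k m \<in> borel_measurable P"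
    and "\<And>k m. k \<ge> 1 \<Longrightarrow> m \<ge> 1 \<Longrightarrow> stable_law \<alpha> (real k powr (-1 / \<alpha>)) 1 0 (distr P borel (X k m))"
    and "prob_space.indep_vars P (\<lambda>_. borel) (\<lambda>(k, m). X k m) {(k, m). k \<ge> 1 \<and> m \<ge> 1}"
proof -
  show P: "prob_space P" using assms unfolding triangular_array_def by auto
  show ind: "prob_space.indep_vars P (\<lambda>_. borel) (\<lambda>(k, m). X k m) {(k, m). k \<ge> 1 \<and> m \<ge> 1}"
    using assms unfolding triangular_array_def by auto
  fix k m :: nat assume "k \<ge> 1" "m \<ge> 1"
  thus "X k m \<in> borel_measurable P"
    using prob_space.indep_vars_def[OF P, THEN iffD1, OF ind] by auto
  show "stable_law \<alpha> (real k powr (-1 / \<alpha>)) 1 0 (distr P borel (X k m))"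
    using assms \<open>k \<ge> 1\<close> \<open>m \<ge> 1\<close> unfolding triangular_array_def by auto
qed

lemma FF_meas:
  assumes "ergodic_aperiodic_pps M T" "admissible_system M T P X f"
  shows "FF T f \<in> M \<rightarrow>\<^sub>M PiM adm_index (\<lambda>_. borel)"
proof -
  have T: "T \<in> M \<rightarrow>\<^sub>M M" using pps_facts(2)[OF assms(1)] .
  have fk: "\<And>k. k \<ge> 1 \<Longrightarrow> f k \<in> borel_measurable M" using assms(2) unfolding admissible_system_def by auto
  show ?thesis unfolding FF_def
  proof (rule measurable_restrict)
    fix i assume "i \<in> adm_index"
    hence "fst i \<ge> 1" by (auto simp: adm_index_def)
    thus "(\<lambda>x. f (fst i) ((T ^^ snd i) x)) \<in> borel_measurable M"
      using measurable_comp[OF funpow_measurable[OF T] fk, unfolded comp_def] by blast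
  qed
qed

lemma GG_meas:
  assumes "triangular_array \<alpha> P X"
  shows "GG X \<in> P \<rightarrow>\<^sub>M PiM adm_index (\<lambda>_. borel)"
  unfolding GG_def
proof (rule measurable_restrict)
  fix i assume "i \<in> adm_index"
  hence "fst i \<ge> 1" by (auto simp: adm_index_def)
  hence "X (fst i) (snd i + 1) \<in> borel_measurable P" using tri_facts(2)[OF assms] by auto
  thus "(\<lambda>\<omega>. Zq (fst i) (X (fst i) (snd i + 1) \<omega>)) \<in> borel_measurable P"
    using measurable_comp[OF _ Zq_meas, unfolded comp_def] by blast
qed

lemma transfer:
  fixes g :: "_ \<Rightarrow> real"
  assumes pps: "ergodic_aperiodic_pps M T" and tri: "triangular_array \<alpha> P X"
    and adm: "admissible_system M T P X f"
    and g: "g \<in> borel_measurable (PiM adm_index (\<lambda>_. borel))"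
  shows "(\<integral>x. g (FF T f x) \<partial>M) = (\<integral>\<omega>. g (GG X \<omega>) \<partial>P)"
    and "integrable M (\<lambda>x. g (FF T f x)) \<longleftrightarrow> integrable P (\<lambda>\<omega>. g (GG X \<omega>))"
proof -
  have eq: "distr M (PiM adm_index (\<lambda>_. borel)) (FF T f) = distr P (PiM adm_index (\<lambda>_. borel)) (GG X)"
    using adm unfolding admissible_system_def FF_def GG_def by auto
  note F = FF_meas[OF pps adm] and G = GG_meas[OF tri]
  show "(\<integral>x. g (FF T f x) \<partial>M) = (\<integral>\<omega>. g (GG X \<omega>) \<partial>P)"
    using integral_distr[OF F g] integral_distr[OF G g] eq by simp
  show "integrable M (\<lambda>x. g (FF T f x)) \<longleftrightarrow> integrable P (\<lambda>\<omega>. g (GG X \<omega>))"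
    using integrable_distr_eq[OF F g] integrable_distr_eq[OF G g] eq by simp
qed

lemma (in prob_space) L1_le_L2:
  fixes W :: "'a \<Rightarrow> real"
  assumes "integrable M W" "integrable M (\<lambda>x. (W x)\<^sup>2)"
  shows "(\<integral>x. \<bar>W x\<bar> \<partial>M) \<le> sqrt (\<integral>x. (W x)\<^sup>2 \<partial>M)"
proof -
  define a where "a = (\<integral>x. \<bar>W x\<bar> \<partial>M)"
  have a0: "a \<ge> 0" unfolding a_def by simp
  have i1: "integrable M (\<lambda>x. \<bar>W x\<bar>)" using assms by auto
  have "0 \<le> (\<integral>x. (\<bar>W x\<bar> - a)\<^sup>2 \<partial>M)" by simp
  also have "(\<lambda>x. (\<bar>W x\<bar> - a)\<^sup>2) = (\<lambda>x. (W x)\<^sup>2 - 2 * a * \<bar>W x\<bar> + a\<^sup>2)"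
    by (auto simp: power2_eq_square algebra_simps)
  also have "(\<integral>x. (W x)\<^sup>2 - 2 * a * \<bar>W x\<bar> + a\<^sup>2 \<partial>M) = (\<integral>x. (W x)\<^sup>2 \<partial>M) - 2 * a * a + a\<^sup>2"
    using assms i1 by (simp add: a_def prob_space)
  finally have "a\<^sup>2 \<le> (\<integral>x. (W x)\<^sup>2 \<partial>M)" by (simp add: power2_eq_square)
  hence "sqrt (a\<^sup>2) \<le> sqrt (\<integral>x. (W x)\<^sup>2 \<partial>M)" by (rule real_sqrt_le_mono)
  thus ?thesis using a0 by (simp add: a_def)
qed

lemma Dk_pos:
  assumes "1 < \<alpha>" "k \<ge> 1"
  shows "Dk \<alpha> k \<ge> 1" and "real (Dk \<alpha> k) \<ge> 4 powr (\<alpha> * real k) / 2"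
proof -
  have "4 powr (\<alpha> * real k) \<ge> 4 powr 1"
    using assms mult_mono[of 1 \<alpha> 1 "real k"] by (intro powr_mono) auto
  hence h: "4 powr (\<alpha> * real k) \<ge> 4" by simp
  have fl: "real_of_int \<lfloor>4 powr (\<alpha> * real k)\<rfloor> > 4 powr (\<alpha> * real k) - 1" by linarith
  have fl0: "\<lfloor>4 powr (\<alpha> * real k)\<rfloor> \<ge> 4" using h by (simp add: le_floor_iff)
  show "Dk \<alpha> k \<ge> 1" using fl0 unfolding Dk_def by linarith
  have "real (Dk \<alpha> k) = real_of_int \<lfloor>4 powr (\<alpha> * real k)\<rfloor>" using fl0 by (simp add: Dk_def)
  thus "real (Dk \<alpha> k) \<ge> 4 powr (\<alpha> * real k) / 2" using fl h by linarith
qed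

lemma Dk_le_dk:
  assumes "\<alpha> < 2" "k \<ge> 2"
  shows "Dk \<alpha> k \<le> dk k"
proof -
  have "4 powr (\<alpha> * real k) \<le> 4 powr (real (k^2))"
    using assms by (intro powr_mono) (auto simp: power2_eq_square intro!: mult_right_mono)
  also have "\<dots> = real (dk k)" using powr_realpow[of 4 "k^2"] by (simp add: dk_def)
  finally have "real_of_int \<lfloor>4 powr (\<alpha> * real k)\<rfloor> \<le> real (dk k)" by linarith
  thus ?thesis unfolding Dk_def by (simp add: nat_le_iff)
qed

lemma n_le_Dk:
  assumes "log 2 (real n) / (2 * \<alpha>) < real k" "n \<ge> 1" "\<alpha> > 0"
  shows "n \<le> Dk \<alpha> k"
proof -
  have "log 2 (real n) < 2 * \<alpha> * real k" using assms by (simp add: divide_less_eq mult.commute)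
  hence "real n < 2 powr (2 * \<alpha> * real k)" using assms by (simp add: log_less_iff)
  also have "2 powr (2 * \<alpha> * real k) = 4 powr (\<alpha> * real k)"
    by (simp add: powr_powr[symmetric] mult.assoc)
  finally have "int n \<le> \<lfloor>4 powr (\<alpha> * real k)\<rfloor>" by (intro le_floor_iff[THEN iffD2]) simp
  thus ?thesis unfolding Dk_def by (simp add: le_nat_iff)
qed

locale sys =
  fixes M :: "'a measure" and T :: "'a \<Rightarrow> 'a"
    and P :: "'b measure" and X :: "nat \<Rightarrow> nat \<Rightarrow> 'b \<Rightarrow> real"
    and f :: "nat \<Rightarrow> 'a \<Rightarrow> real" and \<alpha> :: real
  assumes a1: "1 < \<alpha>" and a2: "\<alpha> < 2"
    and pps: "ergodic_aperiodic_pps M T"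
    and tri: "triangular_array \<alpha> P X"
    and adm: "admissible_system M T P X f"
begin

lemma PM: "prob_space M" using pps_facts(1)[OF pps] .
lemma PP: "prob_space P" using tri_facts(1)[OF tri] .

lemma fk_meas: "k \<ge> 1 \<Longrightarrow> f k \<in> borel_measurable M"
  using adm unfolding admissible_system_def by auto

lemma fkj_meas: "k \<ge> 1 \<Longrightarrow> (\<lambda>x. f k ((T ^^ j) x)) \<in> borel_measurable M"
  using measurable_comp[OF funpow_measurable[OF pps_facts(2)[OF pps]] fk_meas, unfolded comp_def] by blast

lemma Xmeas: "k \<ge> 1 \<Longrightarrow> m \<ge> 1 \<Longrightarrow> X k m \<in> borel_measurable P"
  using tri_facts(2)[OF tri] by auto

lemma Zmeas: "k \<ge> 1 \<Longrightarrow> m \<ge> 1 \<Longrightarrow> (\<lambda>\<omega>. Zq k (X k m \<omega>)) \<in> borel_measurable P"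
  using measurable_comp[OF Xmeas Zq_meas, unfolded comp_def] by blast

lemma Zint: assumes "k \<ge> 1" "m \<ge> 1" shows "integrable P (\<lambda>\<omega>. Zq k (X k m \<omega>))"
proof -
  interpret p: prob_space P by (rule PP)
  show ?thesis
    by (rule p.integrable_const_bound[where B="4^k"])
       (use Zmeas[OF assms] Zq_nonneg Zq_le in auto)
qed

lemma adm_in: "k \<ge> 1 \<Longrightarrow> m < 2 * dk k \<Longrightarrow> (k, m) \<in> adm_index"
  by (simp add: adm_index_def)

lemma comp_meas: "(k, m) \<in> adm_index \<Longrightarrow> (\<lambda>v. v (k, m)) \<in> borel_measurable (PiM adm_index (\<lambda>_. borel))"
  by (rule measurable_component_singleton)

lemma transfer_single:
  assumes k: "k \<ge> 1" and m: "m < 2 * dk k"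
  shows "integrable M (\<lambda>x. f k ((T ^^ m) x))"
    and "(\<integral>x. f k ((T ^^ m) x) \<partial>M) = (\<integral>\<omega>. Zq k (X k (m + 1) \<omega>) \<partial>P)"
proof -
  have i: "(k, m) \<in> adm_index" using adm_in[OF k m] .
  note tr = transfer[OF pps tri adm comp_meas[OF i]]
  have e1: "(\<lambda>x. FF T f x (k, m)) = (\<lambda>x. f k ((T ^^ m) x))" using i by (simp add: FF_def)
  have e2: "(\<lambda>\<omega>. GG X \<omega> (k, m)) = (\<lambda>\<omega>. Zq k (X k (m + 1) \<omega>))" using i by (simp add: GG_def)
  show "integrable M (\<lambda>x. f k ((T ^^ m) x))" using tr(2) Zint[OF k, of "m+1"] unfolding e1 e2 by simp
  show "(\<integral>x. f k ((T ^^ m) x) \<partial>M) = (\<integral>\<omega>. Zq k (X k (m + 1) \<omega>) \<partial>P)" using tr(1) unfolding e1 e2 .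
qed

lemma dk_pos: "dk k \<ge> 1" by (simp add: dk_def)

lemma fk_int: "k \<ge> 1 \<Longrightarrow> integrable M (f k)"
  using transfer_single(1)[of k 0] dk_pos[of k] by simp

lemma fkj_int: "k \<ge> 1 \<Longrightarrow> integrable M (\<lambda>x. f k ((T ^^ j) x))"
  using invariant_integral(2)[OF pps fk_meas] fk_int by blast

lemma fkj_integral: "k \<ge> 1 \<Longrightarrow> (\<integral>x. f k ((T ^^ j) x) \<partial>M) = (\<integral>x. f k x \<partial>M)"
  using invariant_integral(1)[OF pps fk_meas] by blast

lemma EZ: "k \<ge> 1 \<Longrightarrow> m < 2 * dk k \<Longrightarrow> (\<integral>\<omega>. Zq k (X k (m + 1) \<omega>) \<partial>P) = (\<integral>x. f k x \<partial>M)"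
  using transfer_single(2) fkj_integral by metis

end

context sys begin

definition "ee k = (\<integral>x. f k x \<partial>M)"

definition "WW n k x = birkhoff_sum T n (\<lambda>y. phik \<alpha> T f k y - (\<integral>z. phik \<alpha> T f k z \<partial>M)) x"

lemma Dpos: "k \<ge> 1 \<Longrightarrow> Dk \<alpha> k \<ge> 1" using Dk_pos(1)[OF a1] by blast

lemma phik_integral:
  assumes k: "k \<ge> 1"
  shows "(\<integral>z. phik \<alpha> T f k z \<partial>M) = ee k"
proof -
  have "(\<integral>z. phik \<alpha> T f k z \<partial>M) = (1 / real (Dk \<alpha> k)) * (\<Sum>j<Dk \<alpha> k. \<integral>x. f k ((T ^^ j) x) \<partial>M)"
    unfolding phik_def using fkj_int[OF k] by simp
  also have "\<dots> = (1 / real (Dk \<alpha> k)) * (real (Dk \<alpha> k) * ee k)"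
    using fkj_integral[OF k] by (simp add: ee_def)
  also have "\<dots> = ee k" using Dpos[OF k] by simp
  finally show ?thesis .
qed

lemma WW_repr:
  assumes k: "k \<ge> 1"
  shows "WW n k x = (\<Sum>m<n + Dk \<alpha> k. (real (cnt n (Dk \<alpha> k) m) / real (Dk \<alpha> k)) * (f k ((T ^^ m) x) - ee k))"
proof -
  define D where "D = Dk \<alpha> k"
  have D0: "real D > 0" using Dpos[OF k] by (simp add: D_def)
  have step: "phik \<alpha> T f k ((T ^^ i) x) - ee k = (\<Sum>j<D. (1 / real D) * (f k ((T ^^ (i + j)) x) - ee k))" for i
  proof -
    have "(\<Sum>j<D. (1 / real D) * (f k ((T ^^ (i + j)) x) - ee k))
        = (1 / real D) * (\<Sum>j<D. f k ((T ^^ (i + j)) x)) - ee k"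
      using D0 by (simp add: sum_distrib_left[symmetric] sum_subtractf right_diff_distrib sum_divide_distrib[symmetric])
    also have "(\<Sum>j<D. f k ((T ^^ (i + j)) x)) = (\<Sum>j<D. f k ((T ^^ j) ((T ^^ i) x)))"
      by (intro sum.cong refl) (simp add: funpow_add add.commute)
    finally show ?thesis by (simp add: phik_def D_def)
  qed
  have "WW n k x = (\<Sum>i<n. phik \<alpha> T f k ((T ^^ i) x) - ee k)"
    unfolding WW_def birkhoff_sum_def phik_integral[OF k] ..
  also have "\<dots> = (\<Sum>i<n. \<Sum>j<D. (1 / real D) * (f k ((T ^^ (i + j)) x) - ee k))"
    by (simp add: step)
  also have "\<dots> = (\<Sum>m<n + D. real (cnt n D m) * ((1 / real D) * (f k ((T ^^ m) x) - ee k)))"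
    by (rule double_sum_reindex)
  also have "\<dots> = (\<Sum>m<n + D. (real (cnt n D m) / real D) * (f k ((T ^^ m) x) - ee k))"
    by (simp add: field_simps)
  finally show ?thesis by (simp add: D_def)
qed

lemma WW_int: assumes k: "k \<ge> 1" shows "integrable M (WW n k)"
proof -
  have "WW n k = (\<lambda>x. \<Sum>m<n + Dk \<alpha> k. (real (cnt n (Dk \<alpha> k) m) / real (Dk \<alpha> k)) * (f k ((T ^^ m) x) - ee k))"
    using WW_repr[OF k] by auto
  interpret pm: prob_space M by (rule PM)
  show ?thesis unfolding \<open>WW n k = _\<close>
    by (intro Bochner_Integration.integrable_sum integrable_mult_right Bochner_Integration.integrable_diff fkj_int[OF k] pm.integrable_const)
qed

end

context sys begin

lemma rconst_gt1: "rconst \<alpha> > 1"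
proof -
  have "2 powr \<alpha> < 2 powr (2::real)" by (subst powr_less_cancel_iff) (use a2 in auto)
  moreover have "2 powr (2::real) = 4" by simp
  ultimately show ?thesis unfolding rconst_def by simp
qed

definition "Mom k = 4 * Aconst \<alpha> * (real k powr (-1 / \<alpha>)) powr \<alpha> * rconst \<alpha> ^ (2*k+1) / (rconst \<alpha> - 1)"

lemma U_orth:
  assumes k: "k \<ge> 1" and m: "m < 2 * dk k" and m': "m' < 2 * dk k" and ne: "m \<noteq> m'"
  shows "(\<integral>\<omega>. (Zq k (X k (m + 1) \<omega>) - ee k) * (Zq k (X k (m' + 1) \<omega>) - ee k) \<partial>P) = 0"
proof -
  interpret p: prob_space P by (rule PP)
  define Xf where "Xf = (\<lambda>(k::nat, m::nat). X k m)"
  have ind: "p.indep_vars (\<lambda>_. borel) Xf {(k, m). k \<ge> 1 \<and> m \<ge> 1}"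
    using tri_facts(4)[OF tri] by (simp add: Xf_def)
  have iv: "p.indep_var (PiM {(k, m+1)} (\<lambda>_. borel)) (\<lambda>\<omega>. restrict (\<lambda>i. Xf i \<omega>) {(k, m+1)})
                         (PiM {(k, m'+1)} (\<lambda>_. borel)) (\<lambda>\<omega>. restrict (\<lambda>i. Xf i \<omega>) {(k, m'+1)})"
    by (rule p.indep_var_restrict[OF ind]) (use k ne in auto)
  define Y1 where "Y1 = (\<lambda>v :: nat \<times> nat \<Rightarrow> real. Zq k (v (k, m+1)) - ee k)"
  define Y2 where "Y2 = (\<lambda>v :: nat \<times> nat \<Rightarrow> real. Zq k (v (k, m'+1)) - ee k)"
  have Y1m: "Y1 \<in> borel_measurable (PiM {(k, m+1)} (\<lambda>_. borel))" unfolding Y1_def by measurable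
  have Y2m: "Y2 \<in> borel_measurable (PiM {(k, m'+1)} (\<lambda>_. borel))" unfolding Y2_def by measurable
  note iv2 = p.indep_var_compose[OF iv Y1m Y2m]
  have c1: "Y1 \<circ> (\<lambda>\<omega>. restrict (\<lambda>i. Xf i \<omega>) {(k, m+1)}) = (\<lambda>\<omega>. Zq k (X k (m + 1) \<omega>) - ee k)"
    by (auto simp: Y1_def Xf_def)
  have c2: "Y2 \<circ> (\<lambda>\<omega>. restrict (\<lambda>i. Xf i \<omega>) {(k, m'+1)}) = (\<lambda>\<omega>. Zq k (X k (m' + 1) \<omega>) - ee k)"
    by (auto simp: Y2_def Xf_def)
  have iv3: "p.indep_var borel (\<lambda>\<omega>. Zq k (X k (m + 1) \<omega>) - ee k) borel (\<lambda>\<omega>. Zq k (X k (m' + 1) \<omega>) - ee k)"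
    using iv2 unfolding c1 c2 .
  have i1: "integrable P (\<lambda>\<omega>. Zq k (X k (m + 1) \<omega>) - ee k)"
    using Zint[OF k, of "m+1"] by auto
  have i2: "integrable P (\<lambda>\<omega>. Zq k (X k (m' + 1) \<omega>) - ee k)"
    using Zint[OF k, of "m'+1"] by auto
  have z1: "(\<integral>\<omega>. Zq k (X k (m + 1) \<omega>) - ee k \<partial>P) = 0"
    using Zint[OF k, of "m+1"] EZ[OF k m] by (simp add: ee_def p.prob_space)
  show ?thesis
    using p.indep_var_lebesgue_integral[OF iv3 i1 i2] z1 by simp
qed

lemma U_sq:
  assumes k: "k \<ge> 1" and m: "m < 2 * dk k"
  shows "(\<integral>\<omega>. (Zq k (X k (m + 1) \<omega>) - ee k)\<^sup>2 \<partial>P) \<le> Mom k"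
proof -
  interpret p: prob_space P by (rule PP)
  define Z where "Z = (\<lambda>\<omega>. Zq k (X k (m + 1) \<omega>))"
  have Zm: "Z \<in> borel_measurable P" unfolding Z_def using Zmeas[OF k, of "m+1"] by simp
  have Zi: "integrable P Z" unfolding Z_def using Zint[OF k, of "m+1"] by simp
  have Z2i: "integrable P (\<lambda>\<omega>. (Z \<omega>)\<^sup>2)"
    by (rule p.integrable_const_bound[where B="(4^k)^2"])
       (use Zm Zq_nonneg Zq_le in \<open>auto simp: Z_def intro!: power_mono\<close>)
  have EZ': "(\<integral>\<omega>. Z \<omega> \<partial>P) = ee k" unfolding Z_def ee_def using EZ[OF k m] .
  have "(\<integral>\<omega>. (Z \<omega> - ee k)\<^sup>2 \<partial>P) = (\<integral>\<omega>. (Z \<omega>)\<^sup>2 - 2 * ee k * Z \<omega> + (ee k)\<^sup>2 \<partial>P)"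
    by (simp add: power2_eq_square algebra_simps)
  also have "\<dots> = (\<integral>\<omega>. (Z \<omega>)\<^sup>2 \<partial>P) - (ee k)\<^sup>2"
    using Zi Z2i EZ' by (simp add: p.prob_space power2_eq_square)
  also have "\<dots> \<le> (\<integral>\<omega>. (Z \<omega>)\<^sup>2 \<partial>P)" by simp
  also have "(\<integral>\<omega>. (Z \<omega>)\<^sup>2 \<partial>P) = (\<integral>x. (Zq k x)\<^sup>2 \<partial>(distr P borel (X k (m + 1))))"
    unfolding Z_def by (rule integral_distr[symmetric]) (use Xmeas[OF k, of "m+1"] in auto)
  also have "\<dots> \<le> Mom k"
    unfolding Mom_def
    by (rule Zq_moment[OF tri_facts(3)[OF tri k]]) (use a1 a2 in auto)
  finally show ?thesis by (simp add: Z_def)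
qed

lemma WW_L2:
  assumes k: "k \<ge> 2" and n: "n \<le> Dk \<alpha> k"
  shows "integrable M (\<lambda>x. (WW n k x)\<^sup>2)"
    and "(\<integral>x. (WW n k x)\<^sup>2 \<partial>M) \<le> (real n)\<^sup>2 / real (Dk \<alpha> k) * Mom k"
proof -
  interpret p: prob_space P by (rule PP)
  have k1: "k \<ge> 1" using k by simp
  define D where "D = Dk \<alpha> k"
  define N where "N = n + D"
  define c where "c m = real (cnt n D m) / real D" for m
  define e where "e = ee k"
  have D1: "D \<ge> 1" using Dpos[OF k1] by (simp add: D_def)
  have ND: "N \<le> 2 * dk k" using Dk_le_dk[OF a2 k] n by (simp add: N_def D_def)
  have inI: "(k, m) \<in> adm_index" if "m < N" for m using adm_in[OF k1] that ND by auto
  define g where "g v = (\<Sum>m<N. c m * (v (k, m) - e))\<^sup>2" for v :: "nat \<times> nat \<Rightarrow> real"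
  have gm: "g \<in> borel_measurable (PiM adm_index (\<lambda>_. borel))"
    unfolding g_def
    by (intro borel_measurable_power borel_measurable_sum borel_measurable_times borel_measurable_const
        borel_measurable_diff comp_meas inI) auto
  have gF: "g (FF T f x) = (WW n k x)\<^sup>2" for x
    unfolding g_def WW_repr[OF k1] FF_def
    by (simp add: inI N_def D_def c_def e_def)
  define U where "U m \<omega> = Zq k (X k (m + 1) \<omega>) - e" for m \<omega>
  have gG: "g (GG X \<omega>) = (\<Sum>m<N. c m * U m \<omega>)\<^sup>2" for \<omega>
    unfolding g_def GG_def U_def by (simp add: inI)
  have Um: "U m \<in> borel_measurable P" for m
    unfolding U_def using Zmeas[OF k1, of "m+1"] by simp
  have Ub: "\<bar>U m \<omega>\<bar> \<le> 4 ^ k + \<bar>e\<bar>" for m \<omega>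
    unfolding U_def using Zq_nonneg[of k "X k (m+1) \<omega>"] Zq_le[of k "X k (m+1) \<omega>"] by linarith
  define S0 where "S0 = (\<Sum>m<N. \<bar>c m\<bar> * (4 ^ k + \<bar>e\<bar>))"
  have sb: "\<bar>\<Sum>m<N. c m * U m \<omega>\<bar> \<le> S0" for \<omega>
  proof -
    have "\<bar>\<Sum>m<N. c m * U m \<omega>\<bar> \<le> (\<Sum>m<N. \<bar>c m * U m \<omega>\<bar>)" by (rule sum_abs)
    also have "\<dots> \<le> S0" unfolding S0_def
      by (intro sum_mono) (auto simp: abs_mult intro!: mult_left_mono Ub)
    finally show ?thesis .
  qed
  have intG: "integrable P (\<lambda>\<omega>. g (GG X \<omega>))"
    unfolding gG
  proof (rule p.integrable_const_bound[where B="S0^2"])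
    show "AE \<omega> in P. norm ((\<Sum>m<N. c m * U m \<omega>)\<^sup>2) \<le> S0\<^sup>2"
    proof (rule AE_I2)
      fix \<omega>
      have "\<bar>\<Sum>m<N. c m * U m \<omega>\<bar> ^ 2 \<le> S0 ^ 2" by (rule power_mono[OF sb abs_ge_zero])
      thus "norm ((\<Sum>m<N. c m * U m \<omega>)\<^sup>2) \<le> S0\<^sup>2" by simp
    qed
    show "(\<lambda>\<omega>. (\<Sum>m<N. c m * U m \<omega>)\<^sup>2) \<in> borel_measurable P" using Um by auto
  qed
  note tr = transfer[OF pps tri adm gm]
  show "integrable M (\<lambda>x. (WW n k x)\<^sup>2)" using tr(2) intG unfolding gF by simp
  have "(\<integral>x. (WW n k x)\<^sup>2 \<partial>M) = (\<integral>\<omega>. (\<Sum>m<N. c m * U m \<omega>)\<^sup>2 \<partial>P)"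
    using tr(1) unfolding gF gG .
  also have "\<dots> = (\<Sum>m<N. (c m)\<^sup>2 * (\<integral>\<omega>. (U m \<omega>)\<^sup>2 \<partial>P))"
  proof (rule p.orth_sum[where B="4 ^ k + \<bar>e\<bar>"])
    show "\<And>m. m \<in> {..<N} \<Longrightarrow> U m \<in> borel_measurable P" using Um by auto
    show "\<And>m \<omega>. m \<in> {..<N} \<Longrightarrow> \<omega> \<in> space P \<Longrightarrow> \<bar>U m \<omega>\<bar> \<le> 4 ^ k + \<bar>e\<bar>" using Ub by auto
    show "\<And>m m'. m \<in> {..<N} \<Longrightarrow> m' \<in> {..<N} \<Longrightarrow> m \<noteq> m' \<Longrightarrow> (\<integral>\<omega>. U m \<omega> * U m' \<omega> \<partial>P) = 0"
      unfolding U_def e_def using U_orth[OF k1] ND by auto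
  qed auto
  also have "\<dots> \<le> (\<Sum>m<N. (c m)\<^sup>2 * Mom k)"
    by (intro sum_mono mult_left_mono) (use U_sq[OF k1] ND in \<open>auto simp: U_def e_def\<close>)
  also have "\<dots> = (\<Sum>m<N. (c m)\<^sup>2) * Mom k" by (simp add: sum_distrib_right)
  also have "\<dots> \<le> (real n)\<^sup>2 / real D * Mom k"
  proof (rule mult_right_mono)
    show "(\<Sum>m<N. (c m)\<^sup>2) \<le> (real n)\<^sup>2 / real D"
      unfolding c_def N_def using cnt_sq_sum[of D n] D1 by simp
    show "0 \<le> Mom k"
      unfolding Mom_def using rconst_gt1 a1 a2 by (auto simp: Aconst_def intro!: divide_nonneg_pos)
  qed
  finally show "(\<integral>x. (WW n k x)\<^sup>2 \<partial>M) \<le> (real n)\<^sup>2 / real (Dk \<alpha> k) * Mom k"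
    by (simp add: D_def)
qed

end

lemma powr_identity:
  fixes \<alpha> :: real
  shows "(4 / 2 powr \<alpha>) ^ (2 * k) / 4 powr (\<alpha> * real k) = (4 powr (1 - \<alpha>)) ^ (2 * k)"
proof -
  have a: "(4 / 2 powr \<alpha>) ^ (2 * k) = 2 powr (real (4 * k) - 2 * \<alpha> * real k)"
  proof -
    have "(4 / 2 powr \<alpha>) = 2 powr (2 - \<alpha>)"
      by (simp add: powr_diff)
    hence "(4 / 2 powr \<alpha>) ^ (2 * k) = 2 powr (real (2 * k) * (2 - \<alpha>))"
      by (simp only: powr_power[of 2])
    thus ?thesis by (simp add: algebra_simps)
  qed
  have b: "4 powr (\<alpha> * real k) = 2 powr (2 * \<alpha> * real k)"
  proof -
    have "4 powr (\<alpha> * real k) = (2 powr 2) powr (\<alpha> * real k)" by simp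
    also have "\<dots> = 2 powr (2 * (\<alpha> * real k))" by (simp only: powr_powr)
    finally show ?thesis by (simp add: mult.assoc)
  qed
  have c: "(4 powr (1 - \<alpha>)) ^ (2 * k) = 2 powr (real (4 * k) - 4 * \<alpha> * real k)"
  proof -
    have "(4 powr (1 - \<alpha>)) ^ (2 * k) = 4 powr (real (2 * k) * (1 - \<alpha>))"
      by (simp only: powr_power[of 4])
    also have "\<dots> = 4 powr ((1 - \<alpha>) * real (2 * k))" by (simp add: mult.commute)
    also have "\<dots> = (2 powr 2) powr ((1 - \<alpha>) * real (2 * k))" by simp
    also have "\<dots> = 2 powr (2 * ((1 - \<alpha>) * real (2 * k)))"
      by (simp only: powr_powr)
    finally show ?thesis by (simp add: algebra_simps)
  qed
  show ?thesis unfolding a b c by (simp add: powr_diff[symmetric] algebra_simps)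
qed

context sys begin

definition "rho = 4 powr (1 - \<alpha>)"
definition "C1 = 8 * Aconst \<alpha> * rconst \<alpha> / (rconst \<alpha> - 1)"

lemma C1_nonneg: "C1 \<ge> 0"
  unfolding C1_def using rconst_gt1 by (auto simp: Aconst_def rconst_def intro!: divide_nonneg_pos)

lemma rho: "0 < rho" "rho < 1"
proof -
  show "0 < rho" by (simp add: rho_def)
  have "4 powr (1 - \<alpha>) < 4 powr 0" by (subst powr_less_cancel_iff) (use a1 in auto)
  thus "rho < 1" by (simp add: rho_def)
qed

lemma Mom_D_bound:
  assumes k: "k \<ge> 1"
  shows "Mom k / real (Dk \<alpha> k) \<le> C1 * rho ^ (2 * k) / real k"
proof -
  define r where "r = rconst \<alpha>"
  define A where "A = Aconst \<alpha>"
  have r1: "r > 1" using rconst_gt1 by (simp add: r_def)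
  have A0: "A \<ge> 0" by (simp add: A_def Aconst_def)
  have kp: "real k > 0" using k by simp
  have sig: "(real k powr (-1 / \<alpha>)) powr \<alpha> = 1 / real k"
  proof -
    have "(real k powr (-1 / \<alpha>)) powr \<alpha> = real k powr (-1 / \<alpha> * \<alpha>)" by (simp only: powr_powr)
    also have "-1 / \<alpha> * \<alpha> = -1" using a1 by simp
    finally show ?thesis using kp by (simp add: powr_minus divide_inverse)
  qed
  have Mom: "Mom k = (4 * A * r / (r - 1)) * (r ^ (2 * k) / real k)"
    unfolding Mom_def sig A_def[symmetric] r_def[symmetric] by (simp add: field_simps)
  have Dge: "real (Dk \<alpha> k) \<ge> 4 powr (\<alpha> * real k) / 2" by (rule Dk_pos(2)[OF a1 k])
  have P4: "4 powr (\<alpha> * real k) > 0" by simp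
  have c0: "4 * A * r / (r - 1) \<ge> 0" using A0 r1 by auto
  have "Mom k / real (Dk \<alpha> k) \<le> Mom k / (4 powr (\<alpha> * real k) / 2)"
  proof (rule divide_left_mono[OF Dge])
    show "0 \<le> Mom k" unfolding Mom using c0 kp r1 A0 by (intro mult_nonneg_nonneg divide_nonneg_pos) auto
    have "real (Dk \<alpha> k) > 0" using Dpos[OF k] by simp
    thus "0 < real (Dk \<alpha> k) * (4 powr (\<alpha> * real k) / 2)" using P4 by simp
  qed
  also have "\<dots> = (2 * (4 * A * r / (r - 1))) * ((r ^ (2 * k) / 4 powr (\<alpha> * real k)) / real k)"
    unfolding Mom by (simp add: field_simps)
  also have "r ^ (2 * k) / 4 powr (\<alpha> * real k) = rho ^ (2 * k)"
    unfolding r_def rconst_def rho_def by (rule powr_identity)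
  also have "(2 * (4 * A * r / (r - 1))) * (rho ^ (2 * k) / real k) = C1 * rho ^ (2 * k) / real k"
    unfolding C1_def A_def[symmetric] r_def[symmetric] by (simp add: field_simps)
  finally show ?thesis .
qed

lemma WW_L1:
  assumes k: "k \<ge> 2" and n: "n \<le> Dk \<alpha> k"
  shows "(\<integral>x. \<bar>WW n k x\<bar> \<partial>M) \<le> real n * sqrt C1 * rho ^ k / sqrt (real k)"
proof -
  interpret pm: prob_space M by (rule PM)
  have k1: "k \<ge> 1" using k by simp
  have D0: "real (Dk \<alpha> k) > 0" using Dpos[OF k1] by simp
  have "(\<integral>x. \<bar>WW n k x\<bar> \<partial>M) \<le> sqrt (\<integral>x. (WW n k x)\<^sup>2 \<partial>M)"
    by (rule pm.L1_le_L2[OF WW_int[OF k1] WW_L2(1)[OF k n]])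
  also have "\<dots> \<le> sqrt ((real n)\<^sup>2 / real (Dk \<alpha> k) * Mom k)"
    by (rule real_sqrt_le_mono[OF WW_L2(2)[OF k n]])
  also have "(real n)\<^sup>2 / real (Dk \<alpha> k) * Mom k = (real n)\<^sup>2 * (Mom k / real (Dk \<alpha> k))" by simp
  also have "\<dots> \<le> (real n)\<^sup>2 * (C1 * rho ^ (2 * k) / real k)"
    by (intro mult_left_mono Mom_D_bound k1) auto
  also have "sqrt \<dots> = real n * sqrt C1 * rho ^ k / sqrt (real k)"
  proof -
    have "rho ^ (2 * k) = (rho ^ k)\<^sup>2" by (simp add: power_mult[symmetric] mult.commute)
    hence sq: "sqrt (rho ^ (2 * k)) = rho ^ k" using rho by simp
    show ?thesis by (simp add: real_sqrt_mult real_sqrt_divide sq)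
  qed
  finally show ?thesis by - (simp_all add: real_sqrt_le_mono)
qed

end

lemma lim_inv_sqrt_log: "(\<lambda>n::nat. 1 / sqrt (log 2 (real n))) \<longlonglongrightarrow> 0"
  by real_asymp

lemma geom_tail:
  fixes rho :: real assumes "0 < rho" "rho < 1"
  shows "(\<lambda>k. if K0 \<le> k then rho ^ k else 0) sums (rho ^ K0 / (1 - rho))"
proof -
  have "(\<lambda>i. rho ^ K0 * rho ^ i) sums (rho ^ K0 * (1 / (1 - rho)))"
    using assms by (intro sums_mult geometric_sums) auto
  hence "(\<lambda>i. (\<lambda>k. if K0 \<le> k then rho ^ k else 0) (i + K0)) sums (rho ^ K0 / (1 - rho))"
    by (simp add: power_add mult.commute)
  hence "(\<lambda>k. if K0 \<le> k then rho ^ k else 0) sums (rho ^ K0 / (1 - rho) + (\<Sum>i<K0. (\<lambda>k. if K0 \<le> k then rho ^ k else 0) i))"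
    by (subst (asm) sums_iff_shift)
  thus ?thesis by simp
qed

context sys begin

definition "LL n = log 2 (real n) / (2 * \<alpha>)"
definition "w n k x = (if LL n < real k then WW n k x else 0)"

lemma Ln_nonneg: "n \<ge> 1 \<Longrightarrow> LL n \<ge> 0"
  unfolding LL_def using a1 by simp

lemma w_int: assumes "n \<ge> 1" shows "integrable M (w n k)"
proof (cases "LL n < real k")
  case True
  hence "k \<ge> 1" using Ln_nonneg[OF assms] by simp
  thus ?thesis using True WW_int unfolding w_def[abs_def] by simp
qed (simp add: w_def[abs_def])

lemma w_bound:
  assumes n: "n \<ge> 1" and k: "k \<ge> 2"
  shows "(\<integral>x. \<bar>w n k x\<bar> \<partial>M) \<le> (if LL n < real k then real n * sqrt C1 * rho ^ k / sqrt (real k) else 0)"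
proof (cases "LL n < real k")
  case True
  have "n \<le> Dk \<alpha> k" by (rule n_le_Dk) (use True n a1 in \<open>auto simp: LL_def\<close>)
  thus ?thesis using WW_L1[OF k] True by (simp add: w_def)
qed (simp add: w_def)

lemma w_sum_bound:
  assumes n: "n \<ge> 1"
  shows "summable (\<lambda>k. \<integral>x. \<bar>w n k x\<bar> \<partial>M)"
proof (rule summable_comparison_test')
  show "summable (\<lambda>k. real n * sqrt C1 * rho ^ k)"
    using rho by (intro summable_mult summable_geometric) auto
  show "norm (\<integral>x. \<bar>w n k x\<bar> \<partial>M) \<le> real n * sqrt C1 * rho ^ k" if "k \<ge> 2" for k
  proof -
    have "norm (\<integral>x. \<bar>w n k x\<bar> \<partial>M) = (\<integral>x. \<bar>w n k x\<bar> \<partial>M)" by simp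
    also have "\<dots> \<le> (if LL n < real k then real n * sqrt C1 * rho ^ k / sqrt (real k) else 0)"
      by (rule w_bound[OF n that])
    also have "\<dots> \<le> real n * sqrt C1 * rho ^ k"
    proof -
      have s1: "sqrt (real k) \<ge> 1" using that by simp
      have "real n * sqrt C1 * rho ^ k \<ge> 0" using rho C1_nonneg by simp
      thus ?thesis using s1 by (auto simp: divide_le_eq intro: order_trans[OF _ mult_left_mono[of 1]])
    qed
    finally show ?thesis .
  qed
qed

lemma rho_powr_LL:
  assumes n: "n \<ge> 1"
  shows "rho powr LL n = real n powr ((1 - \<alpha>) / \<alpha>)"
proof -
  have "rho powr LL n = 4 powr ((1 - \<alpha>) * LL n)" unfolding rho_def by (simp only: powr_powr)
  also have "\<dots> = (2 powr 2) powr ((1 - \<alpha>) * LL n)" by simp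
  also have "\<dots> = 2 powr (2 * ((1 - \<alpha>) * LL n))" by (simp only: powr_powr)
  also have "2 * ((1 - \<alpha>) * LL n) = log 2 (real n) * ((1 - \<alpha>) / \<alpha>)"
    unfolding LL_def using a1 by (simp add: field_simps)
  hence "2 powr (2 * ((1 - \<alpha>) * LL n)) = 2 powr (log 2 (real n) * ((1 - \<alpha>) / \<alpha>))" by simp
  also have "\<dots> = (2 powr log 2 (real n)) powr ((1 - \<alpha>) / \<alpha>)" by (simp only: powr_powr)
  also have "\<dots> = real n powr ((1 - \<alpha>) / \<alpha>)" using n by simp
  finally show ?thesis .
qed

lemma tail_sum_bound:
  assumes n: "n \<ge> 16"
  shows "(\<Sum>k. \<integral>x. \<bar>w n k x\<bar> \<partial>M) \<le> real n * real n powr ((1 - \<alpha>) / \<alpha>) * sqrt C1 / ((1 - rho) * sqrt (LL n))"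
proof -
  have n1: "n \<ge> 1" using n by simp
  have "log 2 (real n) \<ge> log 2 16" using n by simp
  moreover have "log 2 (16::real) = 4"
  proof -
    have "log 2 (16::real) = log 2 ((2::real) ^ 4)" by simp
    also have "\<dots> = real 4 * log 2 2" by (rule log_nat_power) simp
    also have "\<dots> = 4" by simp
    finally show ?thesis .
  qed
  ultimately have "log 2 (real n) \<ge> 4" by simp
  hence LL1: "LL n > 1" unfolding LL_def using a1 a2 by (simp add: field_simps)
  define K0 where "K0 = nat \<lfloor>LL n\<rfloor> + 1"
  have K0iff: "LL n < real k \<longleftrightarrow> K0 \<le> k" for k
    unfolding K0_def using LL1 by linarith
  have K0gt: "real K0 > LL n" unfolding K0_def using LL1 by linarith
  define c where "c = real n * sqrt C1 / sqrt (LL n)"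
  have c0: "c \<ge> 0" unfolding c_def using C1_nonneg LL1 by simp
  have gs: "(\<lambda>k. c * (if K0 \<le> k then rho ^ k else 0)) sums (c * (rho ^ K0 / (1 - rho)))"
    by (intro sums_mult geom_tail rho)
  have le: "(\<integral>x. \<bar>w n k x\<bar> \<partial>M) \<le> c * (if K0 \<le> k then rho ^ k else 0)" for k
  proof (cases "LL n < real k")
    case True
    hence k2: "k \<ge> 2" using LL1 by linarith
    have "(\<integral>x. \<bar>w n k x\<bar> \<partial>M) \<le> real n * sqrt C1 * rho ^ k / sqrt (real k)"
      using w_bound[OF n1 k2] True by simp
    also have "\<dots> \<le> real n * sqrt C1 * rho ^ k / sqrt (LL n)"
      using True LL1 rho C1_nonneg by (intro divide_left_mono) auto
    finally show ?thesis using True K0iff by (simp add: c_def)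
  next
    case False thus ?thesis using K0iff by (simp add: w_def)
  qed
  have "(\<Sum>k. \<integral>x. \<bar>w n k x\<bar> \<partial>M) \<le> (\<Sum>k. c * (if K0 \<le> k then rho ^ k else 0))"
    by (rule suminf_le[OF le w_sum_bound[OF n1] sums_summable[OF gs]])
  also have "\<dots> = c * (rho ^ K0 / (1 - rho))" using gs by (simp add: sums_iff)
  also have "\<dots> \<le> c * (rho powr LL n / (1 - rho))"
  proof -
    have "rho ^ K0 = rho powr real K0" using rho by (simp add: powr_realpow)
    also have "\<dots> \<le> rho powr LL n" using rho K0gt by (intro powr_mono') auto
    finally show ?thesis using c0 rho by (intro mult_left_mono divide_right_mono) auto
  qed
  also have "\<dots> = real n * real n powr ((1 - \<alpha>) / \<alpha>) * sqrt C1 / ((1 - rho) * sqrt (LL n))"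
    unfolding c_def rho_powr_LL[OF n1] by (simp add: field_simps)
  finally show ?thesis .
qed

end

context sys begin

lemma partial_eq:
  "(\<Sum>k\<in>{k. log 2 (real n) / (2 * \<alpha>) < real k \<and> k \<le> K}.
      birkhoff_sum T n (\<lambda>y. phik \<alpha> T f k y - (\<integral>z. phik \<alpha> T f k z \<partial>M)) x) = (\<Sum>k\<le>K. w n k x)"
proof -
  have "(\<Sum>k\<le>K. w n k x) = (\<Sum>k\<in>{..K} \<inter> {k. LL n < real k}. WW n k x)"
    unfolding w_def by (simp add: sum.inter_restrict)
  also have "{..K} \<inter> {k. LL n < real k} = {k. log 2 (real n) / (2 * \<alpha>) < real k \<and> k \<le> K}"
    unfolding LL_def by auto
  finally show ?thesis by (simp add: WW_def)
qed

lemma main: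
  shows "\<exists>V :: nat \<Rightarrow> 'a \<Rightarrow> real.
     (\<forall>n::nat. n \<ge> 1 \<longrightarrow>
        V n \<in> borel_measurable M \<and> integrable M (V n) \<and>
        (\<lambda>K::nat. \<integral>x. \<bar>(\<Sum>k\<in>{k. log 2 (real n) / (2 * \<alpha>) < real k \<and> k \<le> K}.
                birkhoff_sum T n (\<lambda>y. phik \<alpha> T f k y - (\<integral>z. phik \<alpha> T f k z \<partial>M)) x) - V n x\<bar> \<partial>M)
          \<longlonglongrightarrow> 0) \<and>
     (\<forall>\<epsilon>>0. (\<lambda>n::nat. measure M {x \<in> space M. \<bar>real n powr (-1 / \<alpha>) * V n x\<bar> > \<epsilon>})
          \<longlonglongrightarrow> 0)"
proof -
  interpret pm: prob_space M by (rule PM)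
  define Q where "Q n V \<longleftrightarrow> V \<in> borel_measurable M \<and> integrable M V \<and>
     (\<lambda>K. \<integral>x. \<bar>(\<Sum>k\<le>K. w n k x) - V x\<bar> \<partial>M) \<longlonglongrightarrow> 0 \<and>
     (\<integral>x. \<bar>V x\<bar> \<partial>M) \<le> (\<Sum>k. \<integral>x. \<bar>w n k x\<bar> \<partial>M)" for n V
  have "\<forall>n. \<exists>V. n \<ge> 1 \<longrightarrow> Q n V"
  proof
    fix n :: nat
    show "\<exists>V. n \<ge> 1 \<longrightarrow> Q n V"
    proof (cases "n \<ge> 1")
      case True
      show ?thesis using series_L1[OF w_int[OF True] w_sum_bound[OF True]] True unfolding Q_def by blast
    qed auto
  qed
  then obtain V where V: "\<And>n. n \<ge> 1 \<Longrightarrow> Q n (V n)" by metis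
  have part1: "\<forall>n::nat. n \<ge> 1 \<longrightarrow>
        V n \<in> borel_measurable M \<and> integrable M (V n) \<and>
        (\<lambda>K::nat. \<integral>x. \<bar>(\<Sum>k\<in>{k. log 2 (real n) / (2 * \<alpha>) < real k \<and> k \<le> K}.
                birkhoff_sum T n (\<lambda>y. phik \<alpha> T f k y - (\<integral>z. phik \<alpha> T f k z \<partial>M)) x) - V n x\<bar> \<partial>M)
          \<longlonglongrightarrow> 0"
    using V unfolding Q_def partial_eq by blast
  have part2: "(\<lambda>n::nat. measure M {x \<in> space M. \<bar>real n powr (-1 / \<alpha>) * V n x\<bar> > \<epsilon>}) \<longlonglongrightarrow> 0"
    if eps: "\<epsilon> > 0" for \<epsilon>
  proof -
    define Kc where "Kc = sqrt C1 * sqrt (2 * \<alpha>) / ((1 - rho) * \<epsilon>)"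
    have bound: "measure M {x \<in> space M. \<bar>real n powr (-1 / \<alpha>) * V n x\<bar> > \<epsilon>} \<le> Kc * (1 / sqrt (log 2 (real n)))"
      if n: "n \<ge> 16" for n
    proof -
      have n1: "n \<ge> 1" using n by simp
      have QV: "Q n (V n)" using V[OF n1] .
      define c where "c = real n powr (-1 / \<alpha>)"
      have c0: "c > 0" unfolding c_def using n1 by simp
      have iV: "integrable M (V n)" using QV unfolding Q_def by blast
      have "measure M {x \<in> space M. \<bar>c * V n x\<bar> > \<epsilon>} \<le> measure M {x \<in> space M. \<bar>c * V n x\<bar> \<ge> \<epsilon>}"
        using iV by (intro pm.finite_measure_mono) auto
      also have "\<dots> \<le> (\<integral>x. \<bar>c * V n x\<bar> \<partial>M) / \<epsilon>"
        by (rule integral_Markov_inequality_measure[OF _ sets.top]) (use iV eps in auto)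
      also have "(\<integral>x. \<bar>c * V n x\<bar> \<partial>M) = c * (\<integral>x. \<bar>V n x\<bar> \<partial>M)"
        using c0 by (simp add: abs_mult)
      also have "c * (\<integral>x. \<bar>V n x\<bar> \<partial>M) / \<epsilon> \<le> c * (real n * real n powr ((1 - \<alpha>) / \<alpha>) * sqrt C1 / ((1 - rho) * sqrt (LL n))) / \<epsilon>"
      proof -
        have "(\<integral>x. \<bar>V n x\<bar> \<partial>M) \<le> (\<Sum>k. \<integral>x. \<bar>w n k x\<bar> \<partial>M)" using QV unfolding Q_def by blast
        also have "\<dots> \<le> real n * real n powr ((1 - \<alpha>) / \<alpha>) * sqrt C1 / ((1 - rho) * sqrt (LL n))"
          by (rule tail_sum_bound[OF n])
        finally show ?thesis using c0 eps by (intro divide_right_mono mult_left_mono) auto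
      qed
      also have "c * (real n * real n powr ((1 - \<alpha>) / \<alpha>) * sqrt C1 / ((1 - rho) * sqrt (LL n))) / \<epsilon>
                 = (c * real n * real n powr ((1 - \<alpha>) / \<alpha>)) * (sqrt C1 / ((1 - rho) * sqrt (LL n) * \<epsilon>))"
        by (simp add: field_simps)
      also have "c * real n * real n powr ((1 - \<alpha>) / \<alpha>) = 1"
      proof -
        have "c * real n * real n powr ((1 - \<alpha>) / \<alpha>) = real n powr (-1 / \<alpha>) * real n powr 1 * real n powr ((1 - \<alpha>) / \<alpha>)"
          unfolding c_def by (metis of_nat_0_le_iff powr_one)
        also have "\<dots> = real n powr (-1 / \<alpha> + 1 + (1 - \<alpha>) / \<alpha>)" by (simp only: powr_add)
        also have ex: "-1 / \<alpha> + 1 + (1 - \<alpha>) / \<alpha> = 0" using a1 by (simp add: field_simps)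
        finally show ?thesis using n1 by simp
      qed
      also have "sqrt (LL n) = sqrt (log 2 (real n)) / sqrt (2 * \<alpha>)"
        unfolding LL_def by (simp add: real_sqrt_divide)
      also have "1 * (sqrt C1 / ((1 - rho) * (sqrt (log 2 (real n)) / sqrt (2 * \<alpha>)) * \<epsilon>)) = Kc * (1 / sqrt (log 2 (real n)))"
        unfolding Kc_def using a1 by (simp add: field_simps)
      finally show ?thesis by (simp add: c_def)
    qed
    have lim: "(\<lambda>n::nat. Kc * (1 / sqrt (log 2 (real n)))) \<longlonglongrightarrow> 0"
      using tendsto_mult_right_zero[OF lim_inv_sqrt_log, of Kc] by simp
    show ?thesis
    proof (rule tendsto_sandwich[OF _ _ tendsto_const lim])
      show "\<forall>\<^sub>F n in sequentially. 0 \<le> measure M {x \<in> space M. \<bar>real n powr (-1 / \<alpha>) * V n x\<bar> > \<epsilon>}"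
        by simp
      show "\<forall>\<^sub>F n in sequentially. measure M {x \<in> space M. \<bar>real n powr (-1 / \<alpha>) * V n x\<bar> > \<epsilon>} \<le> Kc * (1 / sqrt (log 2 (real n)))"
        using bound eventually_sequentially by blast
    qed
  qed
  show ?thesis using part1 part2 by blast
qed

end

theorem lemma5p2:
  fixes M :: "'a measure" and T :: "'a \<Rightarrow> 'a"
    and P :: "'b measure" and X :: "nat \<Rightarrow> nat \<Rightarrow> 'b \<Rightarrow> real"
    and f :: "nat \<Rightarrow> 'a \<Rightarrow> real" and \<alpha> :: real
  assumes "1 < \<alpha>" and "\<alpha> < 2"
    and "ergodic_aperiodic_pps M T"
    and "triangular_array \<alpha> P X"
    and "admissible_system M T P X f"
  shows "\<exists>V :: nat \<Rightarrow> 'a \<Rightarrow> real.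
     (\<forall>n::nat. n \<ge> 1 \<longrightarrow>
        V n \<in> borel_measurable M \<and> integrable M (V n) \<and>
        (\<lambda>K::nat. \<integral>x. \<bar>(\<Sum>k\<in>{k. log 2 (real n) / (2 * \<alpha>) < real k \<and> k \<le> K}.
                birkhoff_sum T n (\<lambda>y. phik \<alpha> T f k y - (\<integral>z. phik \<alpha> T f k z \<partial>M)) x) - V n x\<bar> \<partial>M)
          \<longlonglongrightarrow> 0) \<and>
     (\<forall>\<epsilon>>0. (\<lambda>n::nat. measure M {x \<in> space M. \<bar>real n powr (-1 / \<alpha>) * V n x\<bar> > \<epsilon>})
          \<longlonglongrightarrow> 0)"
  proof -
  interpret sys M T P X f \<alpha> using assms by unfold_locales
  show ?thesis by (rule main)
qed

end
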